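(* Fix positive integers $n_x$ and $N_h$, a scalar $\eta>0$, and matrices $A_j, B, C, C_J, L, \Delta A\in\mathbb{R}^{n_x\times n_x}$ with $B$, $C$ and $C_J$ invertible. Define, for $K\in\mathbb{R}^{n_x\times n_x}$, $$\bar q(K,\delta_j)\triangleq \eta\|K\|_F^2+\sum_{i=2}^{n_xN_h}\sigma_i(\kappa^{-1}),\qquad \kappa=F_p(K,\delta_j)F_r(K,\delta_j)^{-1},$$ with $F_p$ and $F_r$ as in the context. Then the function $K\mapsto\bar q(K,\delta_j)$ is strongly convex on $\mathbb{R}^{n_x\times n_x}$.
   Context: Here $\delta_j$ labels one fixed realization of a parametric uncertainty. $A_j$ is the plant system matrix under $\delta_j$, $B$ the input matrix, $C$ the measurement matrix, $C_J$ the performance output matrix, $L$ an observer gain, and $\Delta A$ a given matrix (the uncertainty perturbation of the system matrix). Set $A_{x,j}\triangleq A_j+BKC$ and $A_{e,j}\triangleq A_j-LC$. For $\upsilon\in\{x,e\}$, $F_{\upsilon a}\in\mathbb{R}^{n_xN_h\times n_xN_h}$ is the block lower-triangular matrix whose $(k,l)$ block ($k,l=1,\dots,N_h$, blocks of size $n_x\times n_x$) is $A_{\upsilon,j}^{k-l}B$ for $k\ge l$ and $0$ for $k<l$. Thus $F_{xa}=F_{xa}(K,\delta_j)$ depends on $K$, while $F_{ea}(\delta_j)$ does not. $F_{ex}(\delta_j)$ is the strictly block lower-triangular matrix whose $(k,l)$ block is $A_{e,j}^{k-l-1}\Delta A$ for $k>l$ and $0$ otherwise. Define $$F_p(K,\delta_j)=(I_{N_h}\otimes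 C_J)F_{xa}(K,\delta_j),\qquad F_r(K,\delta_j)=(I_{N_h}\otimes C)\big(F_{ea}(\delta_j)+F_{ex}(\delta_j)F_{xa}(K,\delta_j)\big).$$ $\|K\|_F$ is the Frobenius norm. $\sigma_1(M)\le\dots\le\sigma_{n_xN_h}(M)$ are the singular values of $M$ in nondecreasing order. *)

theory Defs
  imports "Jordan_Normal_Form.Matrix"
begin

definition minv :: "real mat \<Rightarrow> real mat" where
  "minv M = (SOME N. N \<in> carrier_mat (dim_col M) (dim_row M) \<and> M * N = 1\<^sub>m (dim_row M)
                        \<and> N * M = 1\<^sub>m (dim_col M))"

text \<open>Block matrix (nN x nN, blocks of size n x n) whose (k,l) block (0-based) is
  f k l if P k l and 0 otherwise.\<close>
definition block_mat :: "nat \<Rightarrow> nat \<Rightarrow> (nat \<Rightarrow> nat \<Rightarrow> bool) \<Rightarrow> (nat \<Rightarrow> nat \<Rightarrow> real mat) \<Rightarrow> real mat" where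
  "block_mat n N P f = mat (n * N) (n * N)
     (\<lambda>(r, c). if P (r div n) (c div n) then f (r div n) (c div n) $$ (r mod n, c mod n) else 0)"

definition kron_id :: "nat \<Rightarrow> nat \<Rightarrow> real mat \<Rightarrow> real mat" where
  "kron_id n N M = block_mat n N (\<lambda>k l. k = l) (\<lambda>k l. M)"

definition F_a :: "nat \<Rightarrow> nat \<Rightarrow> real mat \<Rightarrow> real mat \<Rightarrow> real mat" where
  "F_a n N Av B = block_mat n N (\<lambda>k l. l \<le> k) (\<lambda>k l. (Av ^\<^sub>m (k - l)) * B)"

definition F_ex :: "nat \<Rightarrow> nat \<Rightarrow> real mat \<Rightarrow> real mat \<Rightarrow> real mat" where
  "F_ex n N Ae DA = block_mat n N (\<lambda>k l. l < k) (\<lambda>k l. (Ae ^\<^sub>m (k - l - 1)) * DA)"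

definition F_p :: "nat \<Rightarrow> nat \<Rightarrow> real mat \<Rightarrow> real mat \<Rightarrow> real mat \<Rightarrow> real mat \<Rightarrow> real mat \<Rightarrow> real mat" where
  "F_p n N A B C CJ K = kron_id n N CJ * F_a n N (A + B * K * C) B"

definition F_r :: "nat \<Rightarrow> nat \<Rightarrow> real mat \<Rightarrow> real mat \<Rightarrow> real mat \<Rightarrow> real mat \<Rightarrow> real mat \<Rightarrow> real mat \<Rightarrow> real mat" where
  "F_r n N A B C L DA K = kron_id n N C *
     (F_a n N (A - L * C) B + F_ex n N (A - L * C) DA * F_a n N (A + B * K * C) B)"

definition frob_norm_sq :: "real mat \<Rightarrow> real" where
  "frob_norm_sq M = (\<Sum>i<dim_row M. \<Sum>j<dim_col M. (M $$ (i, j))\<^sup>2)"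

definition frob_norm :: "real mat \<Rightarrow> real" where
  "frob_norm M = sqrt (frob_norm_sq M)"

definition orthogonal_mat :: "nat \<Rightarrow> real mat \<Rightarrow> bool" where
  "orthogonal_mat m U \<longleftrightarrow> U \<in> carrier_mat m m \<and> transpose_mat U * U = 1\<^sub>m m"

definition diag_of_list :: "real list \<Rightarrow> real mat" where
  "diag_of_list s = mat (length s) (length s) (\<lambda>(i, j). if i = j then s ! i else 0)"

definition singular_values :: "real mat \<Rightarrow> real list" where
  "singular_values M = (THE s. length s = dim_row M \<and> sorted s \<and> (\<forall>x \<in> set s. 0 \<le> x) \<and>
      (\<exists>U V. orthogonal_mat (dim_row M) U \<and> orthogonal_mat (dim_row M) V \<and>
             M = U * diag_of_list s * transpose_mat V))"

text \<open>\<sigma>_i(M), 1-based index.\<close>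
definition sigma :: "real mat \<Rightarrow> nat \<Rightarrow> real" where
  "sigma M i = singular_values M ! (i - 1)"

definition q_bar :: "nat \<Rightarrow> nat \<Rightarrow> real \<Rightarrow> real mat \<Rightarrow> real mat \<Rightarrow> real mat \<Rightarrow> real mat \<Rightarrow> real mat \<Rightarrow> real mat
                      \<Rightarrow> real mat \<Rightarrow> real" where
  "q_bar n N \<eta> A B C CJ L DA K =
     (let \<kappa> = F_p n N A B C CJ K * minv (F_r n N A B C L DA K)
      in \<eta> * (frob_norm K)\<^sup>2 + (\<Sum>i = 2..n * N. sigma (minv \<kappa>) i))"

definition strongly_convex_on_mat :: "nat \<Rightarrow> nat \<Rightarrow> (real mat \<Rightarrow> real) \<Rightarrow> bool" where
  "strongly_convex_on_mat n m f \<longleftrightarrow> (\<exists>\<mu> > 0. \<forall>X \<in> carrier_mat n m. \<forall>Y \<in> carrier_mat n m.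
      \<forall>t::real. 0 \<le> t \<and> t \<le> 1 \<longrightarrow>
        f (t \<cdot>\<^sub>m X + (1 - t) \<cdot>\<^sub>m Y) \<le> t * f X + (1 - t) * f Y
          - (\<mu> / 2) * t * (1 - t) * (frob_norm (X - Y))\<^sup>2)"

end

theory Submission
  imports Defs "Jordan_Normal_Form.Schur_Decomposition"
begin

lemma mult_entry:
  assumes "A \<in> carrier_mat nr k" "B \<in> carrier_mat k nc" "i < nr" "j < nc"
  shows "(A * B) $$ (i, j) = (\<Sum>l<k. A $$ (i, l) * B $$ (l, j))"
  using assms by (auto simp: scalar_prod_def row_def col_def lessThan_atLeast0 intro!: sum.cong)

lemma orth_carrier: "orthogonal_mat m U \<Longrightarrow> U \<in> carrier_mat m m"
  by (simp add: orthogonal_mat_def)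

lemma orth_left: "orthogonal_mat m U \<Longrightarrow> transpose_mat U * U = 1\<^sub>m m"
  by (simp add: orthogonal_mat_def)

lemma orth_right: assumes "orthogonal_mat m U" shows "U * transpose_mat U = 1\<^sub>m m"
proof -
  have U: "U \<in> carrier_mat m m" using assms by (simp add: orthogonal_mat_def)
  show ?thesis
    by (rule mat_mult_left_right_inverse[of "transpose_mat U" m U]) (use U assms in \<open>auto simp: orthogonal_mat_def\<close>)
qed

lemma orth_transpose: assumes "orthogonal_mat m U" shows "orthogonal_mat m (transpose_mat U)"
  using orth_right[OF assms] orth_carrier[OF assms] unfolding orthogonal_mat_def by auto

lemma orth_mult: assumes "orthogonal_mat m U" "orthogonal_mat m V" shows "orthogonal_mat m (U * V)"
proof -
  have U: "U \<in> carrier_mat m m" and V: "V \<in> carrier_mat m m" using assms orth_carrier by auto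
  have "transpose_mat (U * V) * (U * V) = transpose_mat V * (transpose_mat U * U) * V"
    using U V by (simp add: transpose_mult assoc_mult_mat[of _ m m _ m _ m])
  also have "\<dots> = 1\<^sub>m m" using orth_left[OF assms(1)] orth_left[OF assms(2)] V by simp
  finally show ?thesis using U V unfolding orthogonal_mat_def by auto
qed

lemma orth_one: "orthogonal_mat m (1\<^sub>m m)"
  unfolding orthogonal_mat_def by simp

lemma diag_carrier[simp]: "diag_of_list s \<in> carrier_mat (length s) (length s)"
  by (simp add: diag_of_list_def)

lemma diag_dims[simp]: "dim_row (diag_of_list s) = length s" "dim_col (diag_of_list s) = length s"
  by (simp_all add: diag_of_list_def)

lemma diag_index: "i < length s \<Longrightarrow> j < length s \<Longrightarrow> diag_of_list s $$ (i, j) = (if i = j then s ! i else 0)"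
  by (simp add: diag_of_list_def)

lemma diag_transpose[simp]: "transpose_mat (diag_of_list s) = diag_of_list s"
  by (rule eq_matI) (auto simp: diag_index)

lemma entry_PDQ:
  assumes P: "P \<in> carrier_mat m m" and Q: "Q \<in> carrier_mat m m" and len: "length s = m"
    and i: "i < m" and j: "j < m"
  shows "(P * diag_of_list s * transpose_mat Q) $$ (i, j) = (\<Sum>k<m. P $$ (i, k) * s ! k * Q $$ (j, k))"
proof -
  have D: "diag_of_list s \<in> carrier_mat m m" using len by auto
  have "(P * diag_of_list s * transpose_mat Q) $$ (i, j) = (\<Sum>l<m. (P * diag_of_list s) $$ (i, l) * transpose_mat Q $$ (l, j))"
    by (rule mult_entry[of _ m m]) (use P Q D i j in auto)
  also have "\<dots> = (\<Sum>l<m. (P $$ (i, l) * s ! l) * Q $$ (j, l))"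
  proof (rule sum.cong[OF refl])
    fix l assume l: "l \<in> {..<m}"
    have "(P * diag_of_list s) $$ (i, l) = (\<Sum>k<m. P $$ (i, k) * diag_of_list s $$ (k, l))"
      by (rule mult_entry[of _ m m]) (use P D i l in auto)
    also have "\<dots> = (\<Sum>k<m. if k = l then P $$ (i, k) * s ! l else 0)"
      by (rule sum.cong[OF refl]) (use l len in \<open>auto simp: diag_index\<close>)
    also have "\<dots> = P $$ (i, l) * s ! l" using l by simp
    finally show "(P * diag_of_list s) $$ (i, l) * transpose_mat Q $$ (l, j) = (P $$ (i, l) * s ! l) * Q $$ (j, l)"
      using Q l j by simp
  qed
  finally show ?thesis by simp
qed

lemma orth_col_norm: assumes "orthogonal_mat m U" "k < m"
  shows "(\<Sum>i<m. (U $$ (i, k))\<^sup>2) = 1"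
proof -
  have U: "U \<in> carrier_mat m m" using assms orth_carrier by auto
  have "1 = (transpose_mat U * U) $$ (k, k)" using orth_left[OF assms(1)] assms(2) by simp
  also have "\<dots> = (\<Sum>i<m. transpose_mat U $$ (k, i) * U $$ (i, k))"
    by (rule mult_entry[of _ m m]) (use U assms in auto)
  also have "\<dots> = (\<Sum>i<m. (U $$ (i, k))\<^sup>2)"
    by (rule sum.cong[OF refl]) (use U assms in \<open>auto simp: power2_eq_square\<close>)
  finally show ?thesis by simp
qed

lemma orth_row_norm: assumes "orthogonal_mat m U" "i < m"
  shows "(\<Sum>k<m. (U $$ (i, k))\<^sup>2) = 1"
proof -
  have U: "U \<in> carrier_mat m m" using assms orth_carrier by auto
  have "(\<Sum>k<m. (transpose_mat U $$ (k, i))\<^sup>2) = 1"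
    by (rule orth_col_norm[OF orth_transpose[OF assms(1)] assms(2)])
  moreover have "(\<Sum>k<m. (transpose_mat U $$ (k, i))\<^sup>2) = (\<Sum>k<m. (U $$ (i, k))\<^sup>2)"
    by (rule sum.cong[OF refl]) (use U assms in auto)
  ultimately show ?thesis by simp
qed

lemma kyfan_scalar:
  fixes s c :: "nat \<Rightarrow> real"
  assumes m: "0 < m" and mono: "\<And>k. k < m \<Longrightarrow> s 0 \<le> s k" and s0: "0 \<le> s 0"
    and c1: "\<And>k. k < m \<Longrightarrow> c k \<le> 1" and csum: "(\<Sum>k<m. c k) \<le> real (m - 1)"
  shows "(\<Sum>k<m. s k * c k) \<le> (\<Sum>k\<in>{1..<m}. s k)"
proof -
  have split: "\<And>f :: nat \<Rightarrow> real. (\<Sum>k<m. f k) = f 0 + (\<Sum>k\<in>{1..<m}. f k)"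
  proof -
    fix f :: "nat \<Rightarrow> real"
    have "{..<m} = insert 0 {1..<m}" using m by auto
    thus "(\<Sum>k<m. f k) = f 0 + (\<Sum>k\<in>{1..<m}. f k)" by simp
  qed
  have "(\<Sum>k\<in>{1..<m}. s k * (c k - 1)) \<le> (\<Sum>k\<in>{1..<m}. s 0 * (c k - 1))"
  proof (rule sum_mono)
    fix k assume k: "k \<in> {1..<m}"
    have "s 0 \<le> s k" using mono k by auto
    moreover have "c k - 1 \<le> 0" using c1 k by auto
    ultimately show "s k * (c k - 1) \<le> s 0 * (c k - 1)" by (simp add: mult_right_mono_neg)
  qed
  also have "\<dots> = s 0 * ((\<Sum>k\<in>{1..<m}. c k) - real (m - 1))"
    by (simp add: sum_subtractf sum_distrib_left[symmetric] right_diff_distrib)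
  finally have A: "(\<Sum>k\<in>{1..<m}. s k * (c k - 1)) \<le> s 0 * ((\<Sum>k\<in>{1..<m}. c k) - real (m - 1))" .
  have B: "s 0 * c 0 + s 0 * ((\<Sum>k\<in>{1..<m}. c k) - real (m - 1)) \<le> 0"
  proof -
    have "s 0 * c 0 + s 0 * ((\<Sum>k\<in>{1..<m}. c k) - real (m - 1)) = s 0 * ((\<Sum>k<m. c k) - real (m - 1))"
      using split[of c] by (simp add: algebra_simps)
    also have "\<dots> \<le> 0" using s0 csum by (simp add: mult_nonneg_nonpos)
    finally show ?thesis .
  qed
  have "(\<Sum>k<m. s k * c k) = s 0 * c 0 + (\<Sum>k\<in>{1..<m}. s k * (c k - 1)) + (\<Sum>k\<in>{1..<m}. s k)"
    using split[of "\<lambda>k. s k * c k"] by (simp add: sum_subtractf right_diff_distrib)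
  thus ?thesis using A B by linarith
qed


lemma kyfan:
  assumes P: "orthogonal_mat m P" and Q: "orthogonal_mat m Q"
    and U: "orthogonal_mat m U" and V: "orthogonal_mat m V"
    and len: "length s = m" and srt: "sorted s" and nn: "\<forall>x\<in>set s. 0 \<le> x"
  shows "(\<Sum>i\<in>{1..<m}. (transpose_mat P * (U * diag_of_list s * transpose_mat V) * Q) $$ (i, i))
          \<le> (\<Sum>i\<in>{1..<m}. s ! i)"
proof (cases "m = 0")
  case True thus ?thesis by simp
next
  case False
  hence m: "0 < m" by simp
  have Pc: "P \<in> carrier_mat m m" and Qc: "Q \<in> carrier_mat m m" and Uc: "U \<in> carrier_mat m m"
    and Vc: "V \<in> carrier_mat m m" using P Q U V orth_carrier by auto
  have D: "diag_of_list s \<in> carrier_mat m m" using len by auto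
  define a where "a = transpose_mat P * U"
  define b where "b = transpose_mat Q * V"
  have a: "orthogonal_mat m a" unfolding a_def by (rule orth_mult[OF orth_transpose[OF P] U])
  have b: "orthogonal_mat m b" unfolding b_def by (rule orth_mult[OF orth_transpose[OF Q] V])
  have ac: "a \<in> carrier_mat m m" and bc: "b \<in> carrier_mat m m" using a b orth_carrier by auto
  have tb: "transpose_mat b = transpose_mat V * Q"
    unfolding b_def using Qc Vc by (simp add: transpose_mult)
  have eq: "transpose_mat P * (U * diag_of_list s * transpose_mat V) * Q = a * diag_of_list s * transpose_mat b"
  proof -
    have Pt: "transpose_mat P \<in> carrier_mat m m" and Vt: "transpose_mat V \<in> carrier_mat m m" using Pc Vc by auto
    have "transpose_mat P * (U * diag_of_list s * transpose_mat V) * Q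
        = transpose_mat P * (U * (diag_of_list s * transpose_mat V)) * Q"
      using assoc_mult_mat[OF Uc D Vt] by simp
    also have "\<dots> = (transpose_mat P * U) * (diag_of_list s * transpose_mat V) * Q"
      using assoc_mult_mat[OF Pt Uc mult_carrier_mat[OF D Vt]] by simp
    also have "\<dots> = (transpose_mat P * U) * ((diag_of_list s * transpose_mat V) * Q)"
      using assoc_mult_mat[OF mult_carrier_mat[OF Pt Uc] mult_carrier_mat[OF D Vt] Qc] by simp
    also have "\<dots> = (transpose_mat P * U) * (diag_of_list s * (transpose_mat V * Q))"
      using assoc_mult_mat[OF D Vt Qc] by simp
    also have "\<dots> = (transpose_mat P * U) * diag_of_list s * (transpose_mat V * Q)"
      using assoc_mult_mat[OF mult_carrier_mat[OF Pt Uc] D mult_carrier_mat[OF Vt Qc]] by simp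
    finally show ?thesis unfolding tb a_def .
  qed
  define c where "c k = (\<Sum>i\<in>{1..<m}. a $$ (i, k) * b $$ (i, k))" for k
  have "(\<Sum>i\<in>{1..<m}. (transpose_mat P * (U * diag_of_list s * transpose_mat V) * Q) $$ (i, i))
       = (\<Sum>i\<in>{1..<m}. \<Sum>k<m. a $$ (i, k) * s ! k * b $$ (i, k))"
    unfolding eq by (rule sum.cong[OF refl], rule entry_PDQ[OF ac bc len]) auto
  also have "\<dots> = (\<Sum>k<m. s ! k * c k)"
    unfolding c_def sum_distrib_left by (subst sum.swap) (auto intro!: sum.cong)
  also have "\<dots> \<le> (\<Sum>i\<in>{1..<m}. s ! i)"
  proof (rule kyfan_scalar[OF m])
    show "\<And>k. k < m \<Longrightarrow> s ! 0 \<le> s ! k" using srt len by (auto intro: sorted_nth_mono)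
    show "0 \<le> s ! 0" using nn len m by auto
    have amgm: "\<And>x y :: real. x * y \<le> (x\<^sup>2 + y\<^sup>2) / 2"
    proof -
      fix x y :: real
      have "(x\<^sup>2 + y\<^sup>2) / 2 - x * y = (x - y)\<^sup>2 / 2" by (simp add: power2_eq_square algebra_simps)
      moreover have "0 \<le> (x - y)\<^sup>2 / 2" by simp
      ultimately show "x * y \<le> (x\<^sup>2 + y\<^sup>2) / 2" by linarith
    qed
    show "c k \<le> 1" if k: "k < m" for k
    proof -
      have "c k \<le> (\<Sum>i\<in>{1..<m}. ((a $$ (i, k))\<^sup>2 + (b $$ (i, k))\<^sup>2) / 2)"
        unfolding c_def by (rule sum_mono) (rule amgm)
      also have "\<dots> \<le> (\<Sum>i<m. ((a $$ (i, k))\<^sup>2 + (b $$ (i, k))\<^sup>2) / 2)"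
        by (rule sum_mono2) auto
      also have "\<dots> = ((\<Sum>i<m. (a $$ (i, k))\<^sup>2) + (\<Sum>i<m. (b $$ (i, k))\<^sup>2)) / 2"
        by (simp only: sum_divide_distrib[symmetric] sum.distrib)
      also have "\<dots> = 1" using orth_col_norm[OF a k] orth_col_norm[OF b k] by simp
      finally show ?thesis .
    qed
    have "(\<Sum>k<m. c k) = (\<Sum>i\<in>{1..<m}. \<Sum>k<m. a $$ (i, k) * b $$ (i, k))"
      unfolding c_def by (rule sum.swap)
    also have "\<dots> \<le> (\<Sum>i\<in>{1..<m}. \<Sum>k<m. ((a $$ (i, k))\<^sup>2 + (b $$ (i, k))\<^sup>2) / 2)"
      by (intro sum_mono amgm)
    also have "\<dots> = (\<Sum>i\<in>{1..<m}. ((\<Sum>k<m. (a $$ (i, k))\<^sup>2) + (\<Sum>k<m. (b $$ (i, k))\<^sup>2)) / 2)"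
      by (simp only: sum_divide_distrib[symmetric] sum.distrib)
    also have "\<dots> = (\<Sum>i\<in>{1..<m}. 1)"
      by (rule sum.cong[OF refl]) (use orth_row_norm[OF a] orth_row_norm[OF b] in auto)
    also have "\<dots> = real (m - 1)" by simp
    finally show "(\<Sum>k<m. c k) \<le> real (m - 1)" .
  qed
  finally show ?thesis .
qed


lemma sym_real_eig:
  fixes S :: "real mat"
  assumes S: "S \<in> carrier_mat m m" and m: "0 < m" and sym: "transpose_mat S = S"
  shows "\<exists>l. eigenvalue S l"
proof -
  define Sc where "Sc = map_mat complex_of_real S"
  have Sc: "Sc \<in> carrier_mat m m" using S by (simp add: Sc_def)
  obtain as where cp: "char_poly Sc = (\<Prod>a\<leftarrow>as. [:-a, 1:])" and len: "length as = m"
    using char_poly_factorized[OF Sc] by blast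
  obtain c rest where as: "as = c # rest" using len m by (cases as) auto
  have "poly (char_poly Sc) c = 0" unfolding cp as by simp
  hence "eigenvalue Sc c" using eigenvalue_root_char_poly[OF Sc] by simp
  then obtain w where ev: "eigenvector Sc w c" unfolding eigenvalue_def by auto
  hence w: "w \<in> carrier_vec m" "w \<noteq> 0\<^sub>v m" "Sc *\<^sub>v w = c \<cdot>\<^sub>v w" using Sc unfolding eigenvector_def by auto
  have symij: "S $$ (i, j) = S $$ (j, i)" if "i < m" "j < m" for i j
  proof -
    have "transpose_mat S $$ (j, i) = S $$ (i, j)" using S that by simp
    thus ?thesis using sym by simp
  qed
  have Sw: "(\<Sum>j<m. complex_of_real (S $$ (i, j)) * w $ j) = c * w $ i" if i: "i < m" for i
  proof -
    have "(Sc *\<^sub>v w) $ i = c * w $ i" using w(3) w(1) i by simp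
    moreover have "(Sc *\<^sub>v w) $ i = (\<Sum>j<m. complex_of_real (S $$ (i, j)) * w $ j)"
      using Sc S w(1) i by (auto simp: Sc_def scalar_prod_def row_def lessThan_atLeast0 intro!: sum.cong)
    ultimately show ?thesis by simp
  qed
  define q where "q = (\<Sum>i<m. \<Sum>j<m. cnj (w $ i) * (complex_of_real (S $$ (i, j)) * w $ j))"
  define r where "r = (\<Sum>i<m. cnj (w $ i) * w $ i)"
  have q1: "q = c * r"
  proof -
    have "q = (\<Sum>i<m. cnj (w $ i) * (c * w $ i))"
      unfolding q_def by (rule sum.cong[OF refl]) (simp add: sum_distrib_left[symmetric] Sw)
    thus ?thesis unfolding r_def by (simp add: sum_distrib_left algebra_simps)
  qed
  have q2: "cnj q = q"
  proof -
    have "cnj q = (\<Sum>i<m. \<Sum>j<m. w $ i * (complex_of_real (S $$ (i, j)) * cnj (w $ j)))"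
      unfolding q_def by (simp add: cnj_sum)
    also have "\<dots> = (\<Sum>j<m. \<Sum>i<m. w $ i * (complex_of_real (S $$ (i, j)) * cnj (w $ j)))"
      by (rule sum.swap)
    also have "\<dots> = q"
      unfolding q_def by (intro sum.cong refl) (simp add: symij algebra_simps)
    finally show ?thesis .
  qed
  have r_real: "r = complex_of_real (\<Sum>i<m. (cmod (w $ i))\<^sup>2)"
    unfolding r_def of_real_sum by (rule sum.cong[OF refl]) (metis complex_norm_square mult.commute)
  obtain i0 where i0: "i0 < m" "w $ i0 \<noteq> 0" using w(1,2) by (metis eq_vecI carrier_vecD index_zero_vec)
  have "0 < (\<Sum>i<m. (cmod (w $ i))\<^sup>2)"
  proof -
    have "0 < (cmod (w $ i0))\<^sup>2" using i0 by simp
    also have "\<dots> \<le> (\<Sum>i<m. (cmod (w $ i))\<^sup>2)"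
      by (rule member_le_sum) (use i0 in auto)
    finally show ?thesis .
  qed
  hence r0: "r \<noteq> 0" unfolding r_real by (metis of_real_eq_0_iff less_irrefl)
  have cr: "cnj r = r" unfolding r_real using Reals_cnj_iff Reals_of_real by blast
  have "c * r = cnj c * r" using q1 q2 cr by (metis complex_cnj_mult)
  hence "cnj c = c" using r0 by simp
  hence cR: "c \<in> \<real>" using Reals_cnj_iff by blast
  define l where "l = Re c"
  have cl: "c = complex_of_real l" unfolding l_def using of_real_Re[OF cR] by simp
  have "complex_of_real (poly (char_poly S) l) = poly (char_poly Sc) c"
    unfolding cl Sc_def of_real_hom.char_poly_hom[OF S] of_real_hom.poly_map_poly ..
  also have "\<dots> = 0" by fact
  finally have "poly (char_poly S) l = 0" by simp
  hence "eigenvalue S l" using eigenvalue_root_char_poly[OF S] by simp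
  thus ?thesis by blast
qed


lemma real_conj_vec: "conjugate (v :: real vec) = v"
  by (rule eq_vecI) auto

lemma real_self_scalar: "(v :: real vec) \<bullet> v = (\<Sum>i<dim_vec v. (v $ i)\<^sup>2)"
  by (simp add: scalar_prod_def power2_eq_square lessThan_atLeast0)

lemma real_self_scalar_nonneg: "0 \<le> (v :: real vec) \<bullet> v"
  unfolding real_self_scalar by (rule sum_nonneg) auto

lemma orth_complete:
  fixes u :: "real vec"
  assumes u: "u \<in> carrier_vec m" and un: "u \<bullet> u = 1"
  shows "\<exists>U. orthogonal_mat m U \<and> col U 0 = u"
proof -
  have u0: "u \<noteq> 0\<^sub>v m" using un u by auto
  have m: "0 < m" using u0 u by (metis carrier_vecD eq_vecI gr0I less_nat_zero_code index_zero_vec(2))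
  interpret cof_vec_space m "TYPE(real)" .
  define b where "b = basis_completion u"
  note bc = basis_completion[OF u u0, folded b_def]
  from bc have b: "set b \<subseteq> carrier_vec m" and dist: "distinct b" and ind: "\<not> lin_dep (set b)"
    and lenb: "length b = m" and hdb: "hd b = u" by auto
  obtain vs where bv: "b = u # vs" using hdb lenb m by (cases b) auto
  define ws where "ws = gram_schmidt m b"
  note gs = gram_schmidt_result[OF b dist ind refl, folded ws_def]
  have corth: "corthogonal ws" and ws: "set ws \<subseteq> carrier_vec m" and lenw: "length ws = m"
    using gs lenb by auto
  have "hd ws = u" unfolding ws_def bv by (rule gram_schmidt_hd[OF u])
  hence ws0: "ws ! 0 = u" using lenw m by (cases ws) auto
  have wsc: "ws ! i \<in> carrier_vec m" if "i < m" for i using ws lenw that by auto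
  have orth: "ws ! i \<bullet> ws ! j = 0 \<longleftrightarrow> i \<noteq> j" if "i < m" "j < m" for i j
    using corthogonalD[OF corth, of i j] that lenw by (simp add: real_conj_vec)
  define nr where "nr i = sqrt (ws ! i \<bullet> ws ! i)" for i
  have pos: "0 < ws ! i \<bullet> ws ! i" if "i < m" for i
    using orth[OF that that] real_self_scalar_nonneg[of "ws ! i"] by linarith
  have nrpos: "0 < nr i" if "i < m" for i using pos[OF that] unfolding nr_def by simp
  have nrsq: "nr i * nr i = ws ! i \<bullet> ws ! i" if "i < m" for i
    using pos[OF that] unfolding nr_def by simp
  define U where "U = mat m m (\<lambda>(i, j). (ws ! j) $ i / nr j)"
  have Uc: "U \<in> carrier_mat m m" unfolding U_def by simp
  have "transpose_mat U * U = 1\<^sub>m m"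
  proof (rule eq_matI)
    fix i j assume i: "i < dim_row (1\<^sub>m m)" and j: "j < dim_col (1\<^sub>m m)"
    hence i: "i < m" and j: "j < m" by auto
    have "(transpose_mat U * U) $$ (i, j) = (\<Sum>k<m. transpose_mat U $$ (i, k) * U $$ (k, j))"
      by (rule mult_entry[of _ m m]) (use Uc i j in auto)
    also have "\<dots> = (\<Sum>k<m. (ws ! i) $ k * (ws ! j) $ k) / (nr i * nr j)"
      unfolding sum_divide_distrib by (rule sum.cong[OF refl]) (use i j in \<open>auto simp: U_def\<close>)
    also have "(\<Sum>k<m. (ws ! i) $ k * (ws ! j) $ k) = ws ! i \<bullet> ws ! j"
      using wsc[OF j] by (simp add: scalar_prod_def lessThan_atLeast0)
    also have "ws ! i \<bullet> ws ! j / (nr i * nr j) = 1\<^sub>m m $$ (i, j)"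
    proof (cases "i = j")
      case True thus ?thesis using nrsq[OF i] pos[OF i] i by simp
    next
      case False thus ?thesis using orth[OF i j] i j by simp
    qed
    finally show "(transpose_mat U * U) $$ (i, j) = 1\<^sub>m m $$ (i, j)" .
  qed (use Uc in auto)
  moreover have "col U 0 = u"
  proof (rule eq_vecI)
    have "nr 0 = 1" unfolding nr_def ws0 un by simp
    thus "\<And>i. i < dim_vec u \<Longrightarrow> col U 0 $ i = u $ i" using u m by (auto simp: U_def ws0)
  qed (use u m Uc in auto)
  ultimately show ?thesis using Uc unfolding orthogonal_mat_def by blast
qed


lemma scalar_transpose:
  fixes A :: "real mat"
  assumes A: "A \<in> carrier_mat n k" and x: "x \<in> carrier_vec k" and y: "y \<in> carrier_vec n"
  shows "(A *\<^sub>v x) \<bullet> y = x \<bullet> (transpose_mat A *\<^sub>v y)"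
proof -
  have "(A *\<^sub>v x) \<bullet> y = (\<Sum>i<n. (\<Sum>j<k. A $$ (i, j) * x $ j) * y $ i)"
    using A x y by (auto simp: scalar_prod_def row_def lessThan_atLeast0 intro!: sum.cong)
  also have "\<dots> = (\<Sum>j<k. x $ j * (\<Sum>i<n. A $$ (i, j) * y $ i))"
    by (simp add: sum_distrib_left sum_distrib_right algebra_simps) (rule sum.swap)
  also have "\<dots> = x \<bullet> (transpose_mat A *\<^sub>v y)"
    using A x y by (auto simp: scalar_prod_def row_def col_def lessThan_atLeast0 intro!: sum.cong)
  finally show ?thesis .
qed

lemma normalize_vec:
  fixes w :: "real vec"
  assumes w: "w \<in> carrier_vec m" "w \<noteq> 0\<^sub>v m"
  shows "(1 / sqrt (w \<bullet> w)) \<cdot>\<^sub>v w \<in> carrier_vec m"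
    "((1 / sqrt (w \<bullet> w)) \<cdot>\<^sub>v w) \<bullet> ((1 / sqrt (w \<bullet> w)) \<cdot>\<^sub>v w) = 1"
    "0 < w \<bullet> w"
proof -
  have "w \<bullet> w \<noteq> 0"
  proof
    assume "w \<bullet> w = 0"
    hence "(\<Sum>i<m. (w $ i)\<^sup>2) = 0" using w(1) real_self_scalar[of w] by simp
    hence "\<forall>i\<in>{..<m}. (w $ i)\<^sup>2 = 0" by (subst sum_nonneg_eq_0_iff[symmetric]) auto
    hence "w = 0\<^sub>v m" using w(1) by (intro eq_vecI) auto
    thus False using w(2) by simp
  qed
  thus pos: "0 < w \<bullet> w" using real_self_scalar_nonneg[of w] by linarith
  show "(1 / sqrt (w \<bullet> w)) \<cdot>\<^sub>v w \<in> carrier_vec m" using w by simp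
  have "((1 / sqrt (w \<bullet> w)) \<cdot>\<^sub>v w) \<bullet> ((1 / sqrt (w \<bullet> w)) \<cdot>\<^sub>v w) = (1 / sqrt (w \<bullet> w)) * (1 / sqrt (w \<bullet> w)) * (w \<bullet> w)"
    using w by simp
  also have "\<dots> = 1" using pos by (simp add: field_simps)
  finally show "((1 / sqrt (w \<bullet> w)) \<cdot>\<^sub>v w) \<bullet> ((1 / sqrt (w \<bullet> w)) \<cdot>\<^sub>v w) = 1" .
qed

lemma sv_pair:
  fixes M :: "real mat"
  assumes M: "M \<in> carrier_mat m m" and m: "0 < m"
  shows "\<exists>\<sigma> u v. 0 \<le> \<sigma> \<and> u \<in> carrier_vec m \<and> v \<in> carrier_vec m \<and> u \<bullet> u = 1 \<and> v \<bullet> v = 1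
     \<and> M *\<^sub>v v = \<sigma> \<cdot>\<^sub>v u \<and> transpose_mat M *\<^sub>v u = \<sigma> \<cdot>\<^sub>v v
     \<and> (\<forall>\<mu>. eigenvalue (transpose_mat M * M) \<mu> \<longrightarrow> \<sigma>\<^sup>2 \<le> \<mu>)"
proof -
  define S where "S = transpose_mat M * M"
  have Mt: "transpose_mat M \<in> carrier_mat m m" using M by simp
  have S: "S \<in> carrier_mat m m" unfolding S_def using M by simp
  have symS: "transpose_mat S = S" unfolding S_def using M by (simp add: transpose_mult)
  define E where "E = {x. eigenvalue S x}"
  have E: "E = {x. poly (char_poly S) x = 0}" unfolding E_def using eigenvalue_root_char_poly[OF S] by blast
  have "char_poly S \<noteq> 0" using degree_monic_char_poly[OF S] by auto
  hence finE: "finite E" unfolding E by (rule poly_roots_finite)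
  have neE: "E \<noteq> {}" using sym_real_eig[OF S m symS] unfolding E_def by auto
  define l where "l = Min E"
  have lE: "eigenvalue S l" using Min_in[OF finE neE] unfolding l_def E_def by simp
  have lmin: "\<And>\<mu>. eigenvalue S \<mu> \<Longrightarrow> l \<le> \<mu>" unfolding l_def using finE E_def by simp
  have ev0: "eigenvector S (find_eigenvector S l) l" by (rule find_eigenvector[OF S lE])
  define v0 where "v0 = find_eigenvector S l"
  have v0: "v0 \<in> carrier_vec m" "v0 \<noteq> 0\<^sub>v m" "S *\<^sub>v v0 = l \<cdot>\<^sub>v v0"
    using ev0 S unfolding eigenvector_def v0_def by auto
  define v where "v = (1 / sqrt (v0 \<bullet> v0)) \<cdot>\<^sub>v v0"
  have v: "v \<in> carrier_vec m" and vv: "v \<bullet> v = 1" using normalize_vec[OF v0(1,2)] unfolding v_def by auto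
  have Sv: "S *\<^sub>v v = l \<cdot>\<^sub>v v" unfolding v_def using v0 S
    by (simp add: mult_mat_vec smult_smult_assoc mult.commute)
  have Mv: "M *\<^sub>v v \<in> carrier_vec m" using M v by simp
  have SvM: "S *\<^sub>v v = transpose_mat M *\<^sub>v (M *\<^sub>v v)" unfolding S_def using M v by (simp add: assoc_mult_mat_vec)
  have lval: "(M *\<^sub>v v) \<bullet> (M *\<^sub>v v) = l"
  proof -
    have "(M *\<^sub>v v) \<bullet> (M *\<^sub>v v) = v \<bullet> (transpose_mat M *\<^sub>v (M *\<^sub>v v))"
      by (rule scalar_transpose[OF M v Mv])
    also have "\<dots> = v \<bullet> (l \<cdot>\<^sub>v v)" using Sv SvM by simp
    also have "\<dots> = l" using v vv by simp
    finally show ?thesis .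
  qed
  show ?thesis
  proof (cases "M *\<^sub>v v = 0\<^sub>v m")
    case False
    define \<sigma> where "\<sigma> = sqrt ((M *\<^sub>v v) \<bullet> (M *\<^sub>v v))"
    define u where "u = (1 / \<sigma>) \<cdot>\<^sub>v (M *\<^sub>v v)"
    note nv = normalize_vec[OF Mv False]
    have u: "u \<in> carrier_vec m" and uu: "u \<bullet> u = 1" using nv unfolding u_def \<sigma>_def by auto
    have sp: "0 < \<sigma>" unfolding \<sigma>_def using nv(3) by simp
    have sl: "\<sigma> * \<sigma> = l" unfolding \<sigma>_def using nv(3) lval by simp
    have e1: "M *\<^sub>v v = \<sigma> \<cdot>\<^sub>v u" unfolding u_def using sp Mv by (simp add: smult_smult_assoc)
    have "transpose_mat M *\<^sub>v u = (1 / \<sigma>) \<cdot>\<^sub>v (S *\<^sub>v v)" unfolding u_def SvM using Mt Mv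
      by (simp add: mult_mat_vec)
    also have "\<dots> = \<sigma> \<cdot>\<^sub>v v"
    proof -
      have "l / \<sigma> = \<sigma>" using sp sl by (simp add: field_simps)
      thus ?thesis unfolding Sv by (simp add: smult_smult_assoc)
    qed
    finally have e2: "transpose_mat M *\<^sub>v u = \<sigma> \<cdot>\<^sub>v v" .
    have "\<forall>\<mu>. eigenvalue S \<mu> \<longrightarrow> \<sigma>\<^sup>2 \<le> \<mu>" using lmin sl by (simp add: power2_eq_square)
    thus ?thesis using sp u v uu vv e1 e2 unfolding S_def by (intro exI[of _ \<sigma>] exI[of _ u] exI[of _ v]) auto
  next
    case True
    have l0: "l = 0" using lval True by simp
    have "v \<noteq> 0\<^sub>v m" using vv v by auto
    hence "det M = 0" using det_0_iff_vec_prod_zero[OF M] v True by blast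
    hence "det (transpose_mat M) = 0" using det_transpose[OF M] by simp
    then obtain u0 where u0: "u0 \<in> carrier_vec m" "u0 \<noteq> 0\<^sub>v m" "transpose_mat M *\<^sub>v u0 = 0\<^sub>v m"
      using det_0_iff_vec_prod_zero[OF Mt] by blast
    define u where "u = (1 / sqrt (u0 \<bullet> u0)) \<cdot>\<^sub>v u0"
    have u: "u \<in> carrier_vec m" and uu: "u \<bullet> u = 1" using normalize_vec[OF u0(1,2)] unfolding u_def by auto
    have e2: "transpose_mat M *\<^sub>v u = 0 \<cdot>\<^sub>v v" unfolding u_def using u0 Mt v
      by (auto simp: mult_mat_vec intro!: eq_vecI)
    have e1: "M *\<^sub>v v = 0 \<cdot>\<^sub>v u" using True u by auto
    have "\<forall>\<mu>. eigenvalue S \<mu> \<longrightarrow> (0::real)\<^sup>2 \<le> \<mu>" using lmin l0 by simp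
    thus ?thesis using u v uu vv e1 e2 unfolding S_def by (intro exI[of _ 0] exI[of _ u] exI[of _ v]) auto
  qed
qed


lemma UtMV_entry:
  fixes M :: "real mat"
  assumes U: "U \<in> carrier_mat m m" and M: "M \<in> carrier_mat m m" and V: "V \<in> carrier_mat m m"
    and i: "i < m" and j: "j < m"
  shows "(transpose_mat U * M * V) $$ (i, j) = col U i \<bullet> (M *\<^sub>v col V j)"
proof -
  have Ut: "transpose_mat U \<in> carrier_mat m m" using U by simp
  have "transpose_mat U * M * V = transpose_mat U * (M * V)" by (rule assoc_mult_mat[OF Ut M V])
  moreover have "col (M * V) j = M *\<^sub>v col V j" by (rule col_mult2[OF M V j])
  moreover have "(transpose_mat U * (M * V)) $$ (i, j) = row (transpose_mat U) i \<bullet> col (M * V) j"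
    by (rule index_mult_mat(1)) (use U M V i j in auto)
  ultimately show ?thesis using U i by simp
qed

lemma orth_col_dot:
  assumes U: "orthogonal_mat m U" and i: "i < m" and j: "j < m"
  shows "col U i \<bullet> col U j = (if i = j then 1 else 0)"
proof -
  have Uc: "U \<in> carrier_mat m m" using U orth_carrier by auto
  have "(transpose_mat U * U) $$ (i, j) = col U i \<bullet> col U j" using Uc i j by simp
  thus ?thesis using orth_left[OF U] i j by simp
qed

lemma fbm_decomp:
  fixes A :: "real mat"
  assumes A: "A \<in> carrier_mat (Suc k) (Suc k)"
   and col0: "\<And>i. i < Suc k \<Longrightarrow> A $$ (i, 0) = (if i = 0 then \<sigma> else 0)"
   and row0: "\<And>j. j < Suc k \<Longrightarrow> A $$ (0, j) = (if j = 0 then \<sigma> else 0)"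
  shows "A = four_block_mat (mat 1 1 (\<lambda>_. \<sigma>)) (0\<^sub>m 1 k) (0\<^sub>m k 1) (mat k k (\<lambda>(i, j). A $$ (Suc i, Suc j)))"
proof (rule eq_matI)
  fix i j assume i: "i < dim_row (four_block_mat (mat 1 1 (\<lambda>_. \<sigma>)) (0\<^sub>m 1 k) (0\<^sub>m k 1) (mat k k (\<lambda>(i, j). A $$ (Suc i, Suc j))))"
    and j: "j < dim_col (four_block_mat (mat 1 1 (\<lambda>_. \<sigma>)) (0\<^sub>m 1 k) (0\<^sub>m k 1) (mat k k (\<lambda>(i, j). A $$ (Suc i, Suc j))))"
  hence i: "i < Suc k" and j: "j < Suc k" by auto
  have e: "four_block_mat (mat 1 1 (\<lambda>_. \<sigma>)) (0\<^sub>m 1 k) (0\<^sub>m k 1) (mat k k (\<lambda>(i, j). A $$ (Suc i, Suc j))) $$ (i, j)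
     = (if i < 1 then if j < 1 then \<sigma> else 0 else if j < 1 then 0 else A $$ (i, j))"
    using i j by (subst index_mat_four_block) auto
  show "A $$ (i, j) = four_block_mat (mat 1 1 (\<lambda>_. \<sigma>)) (0\<^sub>m 1 k) (0\<^sub>m k 1) (mat k k (\<lambda>(i, j). A $$ (Suc i, Suc j))) $$ (i, j)"
    unfolding e using col0[OF i] row0[OF j] by auto
qed (use A in auto)

lemma deflate:
  fixes M :: "real mat"
  assumes M: "M \<in> carrier_mat (Suc k) (Suc k)" and U: "orthogonal_mat (Suc k) U" and V: "orthogonal_mat (Suc k) V"
    and cu: "col U 0 = u" and cv: "col V 0 = v"
    and e1: "M *\<^sub>v v = \<sigma> \<cdot>\<^sub>v u" and e2: "transpose_mat M *\<^sub>v u = \<sigma> \<cdot>\<^sub>v v"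
  shows "transpose_mat U * M * V = four_block_mat (mat 1 1 (\<lambda>_. \<sigma>)) (0\<^sub>m 1 k) (0\<^sub>m k 1)
            (mat k k (\<lambda>(i, j). (transpose_mat U * M * V) $$ (Suc i, Suc j)))"
proof -
  have Uc: "U \<in> carrier_mat (Suc k) (Suc k)" using U by (rule orth_carrier)
  have Vc: "V \<in> carrier_mat (Suc k) (Suc k)" using V by (rule orth_carrier)
  have colc: "col W j \<in> carrier_vec (Suc k)" if "W \<in> carrier_mat (Suc k) (Suc k)" for W :: "real mat" and j
    using that by (intro carrier_vecI) simp
  have col0: "(transpose_mat U * M * V) $$ (i, 0) = (if i = 0 then \<sigma> else 0)" if i: "i < Suc k" for i
  proof -
    have "(transpose_mat U * M * V) $$ (i, 0) = col U i \<bullet> (M *\<^sub>v col V 0)" by (rule UtMV_entry[OF Uc M Vc i]) simp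
    also have "M *\<^sub>v col V 0 = \<sigma> \<cdot>\<^sub>v col U 0" unfolding cv cu by (rule e1)
    also have "col U i \<bullet> (\<sigma> \<cdot>\<^sub>v col U 0) = \<sigma> * (col U i \<bullet> col U 0)"
      by (rule scalar_prod_smult_distrib[OF colc[OF Uc] colc[OF Uc]])
    also have "col U i \<bullet> col U 0 = (if i = 0 then 1 else 0)" by (rule orth_col_dot[OF U i]) simp
    finally show ?thesis by simp
  qed
  have row0: "(transpose_mat U * M * V) $$ (0, j) = (if j = 0 then \<sigma> else 0)" if j: "j < Suc k" for j
  proof -
    have "(transpose_mat U * M * V) $$ (0, j) = col U 0 \<bullet> (M *\<^sub>v col V j)" by (rule UtMV_entry[OF Uc M Vc _ j]) simp
    also have "\<dots> = (M *\<^sub>v col V j) \<bullet> col U 0"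
      by (rule comm_scalar_prod[OF colc[OF Uc]]) (use M colc[OF Vc] in simp)
    also have "\<dots> = col V j \<bullet> (transpose_mat M *\<^sub>v col U 0)" by (rule scalar_transpose[OF M colc[OF Vc] colc[OF Uc]])
    also have "transpose_mat M *\<^sub>v col U 0 = \<sigma> \<cdot>\<^sub>v col V 0" unfolding cu cv by (rule e2)
    also have "col V j \<bullet> (\<sigma> \<cdot>\<^sub>v col V 0) = \<sigma> * (col V j \<bullet> col V 0)"
      by (rule scalar_prod_smult_distrib[OF colc[OF Vc] colc[OF Vc]])
    also have "col V j \<bullet> col V 0 = (if j = 0 then 1 else 0)" by (rule orth_col_dot[OF V j]) simp
    finally show ?thesis by simp
  qed
  have "transpose_mat U * M * V \<in> carrier_mat (Suc k) (Suc k)" using Uc Vc M by simp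
  from fbm_decomp[OF this col0 row0] show ?thesis .
qed

lemma E_carrier: "W \<in> carrier_mat k k \<Longrightarrow> four_block_mat (1\<^sub>m 1) (0\<^sub>m 1 k) (0\<^sub>m k 1) W \<in> carrier_mat (Suc k) (Suc k)"
  by auto

lemma E_orth:
  assumes W: "orthogonal_mat k W"
  shows "orthogonal_mat (Suc k) (four_block_mat (1\<^sub>m 1) (0\<^sub>m 1 k) (0\<^sub>m k 1) W)"
proof -
  have Wc: "W \<in> carrier_mat k k" using W orth_carrier by auto
  have "transpose_mat (four_block_mat (1\<^sub>m 1) (0\<^sub>m 1 k) (0\<^sub>m k 1) W) * four_block_mat (1\<^sub>m 1) (0\<^sub>m 1 k) (0\<^sub>m k 1) W
     = four_block_mat (1\<^sub>m 1) (0\<^sub>m 1 k) (0\<^sub>m k 1) (transpose_mat W * W)"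
  proof -
    have T: "transpose_mat (four_block_mat (1\<^sub>m 1) (0\<^sub>m 1 k) (0\<^sub>m k 1) W) = four_block_mat (1\<^sub>m 1) (0\<^sub>m 1 k) (0\<^sub>m k 1) (transpose_mat W)"
      using transpose_four_block_mat[OF one_carrier_mat zero_carrier_mat zero_carrier_mat Wc] by simp
    have Wt: "transpose_mat W \<in> carrier_mat k k" using Wc by simp
    show ?thesis unfolding T
      using mult_four_block_mat[OF one_carrier_mat zero_carrier_mat zero_carrier_mat Wt one_carrier_mat zero_carrier_mat zero_carrier_mat Wc]
      using Wc by simp
  qed
  also have "\<dots> = 1\<^sub>m (Suc k)" unfolding orth_left[OF W]
    by (rule eq_matI) auto
  finally show ?thesis using Wc unfolding orthogonal_mat_def by auto
qed

lemma fbm_mult_helper: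
  assumes Wt: "(Wt::real mat) \<in> carrier_mat k k" and X: "X \<in> carrier_mat k k"
  shows "four_block_mat (1\<^sub>m 1) (0\<^sub>m 1 k) (0\<^sub>m k 1) Wt * four_block_mat (mat 1 1 (\<lambda>_. \<sigma>)) (0\<^sub>m 1 k) (0\<^sub>m k 1) X
     = four_block_mat (mat 1 1 (\<lambda>_. \<sigma>)) (0\<^sub>m 1 k) (0\<^sub>m k 1) (Wt * X)"
proof -
  have s1: "mat 1 1 (\<lambda>_. \<sigma>) \<in> carrier_mat 1 1" by simp
  have a: "1\<^sub>m 1 * mat 1 1 (\<lambda>_. \<sigma>) + 0\<^sub>m 1 k * 0\<^sub>m k 1 = mat 1 1 (\<lambda>_. \<sigma>)"
    by (rule eq_matI) (auto simp: scalar_prod_def)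
  have b: "1\<^sub>m 1 * 0\<^sub>m 1 k + 0\<^sub>m 1 k * X = 0\<^sub>m 1 k" using X by simp
  have c: "0\<^sub>m k 1 * mat 1 1 (\<lambda>_. \<sigma>) + Wt * 0\<^sub>m k 1 = 0\<^sub>m k 1" using Wt by simp
  have d: "0\<^sub>m k 1 * 0\<^sub>m 1 k + Wt * X = Wt * X" using Wt X by simp
  show ?thesis
    using mult_four_block_mat[OF one_carrier_mat zero_carrier_mat zero_carrier_mat Wt s1 zero_carrier_mat zero_carrier_mat X]
    unfolding a b c d .
qed

lemma fbm_mult_helper2:
  assumes Y: "(Y::real mat) \<in> carrier_mat k k" and W: "W \<in> carrier_mat k k"
  shows "four_block_mat (mat 1 1 (\<lambda>_. \<sigma>)) (0\<^sub>m 1 k) (0\<^sub>m k 1) Y * four_block_mat (1\<^sub>m 1) (0\<^sub>m 1 k) (0\<^sub>m k 1) W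
     = four_block_mat (mat 1 1 (\<lambda>_. \<sigma>)) (0\<^sub>m 1 k) (0\<^sub>m k 1) (Y * W)"
proof -
  have s1: "mat 1 1 (\<lambda>_. \<sigma>) \<in> carrier_mat 1 1" by simp
  have a: "mat 1 1 (\<lambda>_. \<sigma>) * 1\<^sub>m 1 + 0\<^sub>m 1 k * 0\<^sub>m k 1 = mat 1 1 (\<lambda>_. \<sigma>)"
    by (rule eq_matI) (auto simp: scalar_prod_def)
  have b: "mat 1 1 (\<lambda>_. \<sigma>) * 0\<^sub>m 1 k + 0\<^sub>m 1 k * W = 0\<^sub>m 1 k" using W by simp
  have c: "0\<^sub>m k 1 * 1\<^sub>m 1 + Y * 0\<^sub>m k 1 = 0\<^sub>m k 1" using Y by simp
  have d: "0\<^sub>m k 1 * 0\<^sub>m 1 k + Y * W = Y * W" using Y W by simp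
  show ?thesis
    using mult_four_block_mat[OF s1 zero_carrier_mat zero_carrier_mat Y one_carrier_mat zero_carrier_mat zero_carrier_mat W]
    unfolding a b c d .
qed

lemma E_sandwich:
  assumes W1: "(W1 :: real mat) \<in> carrier_mat k k" and W2: "W2 \<in> carrier_mat k k" and X: "X \<in> carrier_mat k k"
  shows "transpose_mat (four_block_mat (1\<^sub>m 1) (0\<^sub>m 1 k) (0\<^sub>m k 1) W1) *
           four_block_mat (mat 1 1 (\<lambda>_. \<sigma>)) (0\<^sub>m 1 k) (0\<^sub>m k 1) X *
           four_block_mat (1\<^sub>m 1) (0\<^sub>m 1 k) (0\<^sub>m k 1) W2
       = four_block_mat (mat 1 1 (\<lambda>_. \<sigma>)) (0\<^sub>m 1 k) (0\<^sub>m k 1) (transpose_mat W1 * X * W2)"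
proof -
  have T: "transpose_mat (four_block_mat (1\<^sub>m 1) (0\<^sub>m 1 k) (0\<^sub>m k 1) W1) = four_block_mat (1\<^sub>m 1) (0\<^sub>m 1 k) (0\<^sub>m k 1) (transpose_mat W1)"
    using transpose_four_block_mat[OF one_carrier_mat zero_carrier_mat zero_carrier_mat W1] by simp
  have Wt: "transpose_mat W1 \<in> carrier_mat k k" using W1 by simp
  have WX: "transpose_mat W1 * X \<in> carrier_mat k k" using Wt X by simp
  show ?thesis unfolding T fbm_mult_helper[OF Wt X] fbm_mult_helper2[OF WX W2] ..
qed

lemma diag_cons: "diag_of_list (\<sigma> # s) = four_block_mat (mat 1 1 (\<lambda>_. \<sigma>)) (0\<^sub>m 1 (length s)) (0\<^sub>m (length s) 1) (diag_of_list s)"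
proof (rule eq_matI)
  fix i j assume i: "i < dim_row (four_block_mat (mat 1 1 (\<lambda>_. \<sigma>)) (0\<^sub>m 1 (length s)) (0\<^sub>m (length s) 1) (diag_of_list s))"
    and j: "j < dim_col (four_block_mat (mat 1 1 (\<lambda>_. \<sigma>)) (0\<^sub>m 1 (length s)) (0\<^sub>m (length s) 1) (diag_of_list s))"
  have i': "i < Suc (length s)" and j': "j < Suc (length s)" using i j by (simp_all add: diag_of_list_def)
  have e: "four_block_mat (mat 1 1 (\<lambda>_. \<sigma>)) (0\<^sub>m 1 (length s)) (0\<^sub>m (length s) 1) (diag_of_list s) $$ (i, j)
     = (if i < 1 then if j < 1 then \<sigma> else 0 else if j < 1 then 0 else diag_of_list s $$ (i - 1, j - 1))"
    by (subst index_mat_four_block) (use i' j' in \<open>auto simp: diag_of_list_def\<close>)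
  show "diag_of_list (\<sigma> # s) $$ (i, j) = four_block_mat (mat 1 1 (\<lambda>_. \<sigma>)) (0\<^sub>m 1 (length s)) (0\<^sub>m (length s) 1) (diag_of_list s) $$ (i, j)"
    unfolding e using i' j' by (cases i; cases j) (auto simp: diag_of_list_def)
qed (auto simp: diag_of_list_def)


lemma colc: "W \<in> carrier_mat n n \<Longrightarrow> col W j \<in> carrier_vec n"
  by (intro carrier_vecI) simp

lemma svd_diag:
  assumes U: "orthogonal_mat m U" and V: "orthogonal_mat m V" and len: "length s = m"
  shows "transpose_mat U * (U * diag_of_list s * transpose_mat V) * V = diag_of_list s"
proof -
  have Uc: "U \<in> carrier_mat m m" and Vc: "V \<in> carrier_mat m m" using U V orth_carrier by blast+
  have Ut: "transpose_mat U \<in> carrier_mat m m" and Vt: "transpose_mat V \<in> carrier_mat m m" using Uc Vc by auto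
  have D: "diag_of_list s \<in> carrier_mat m m" using len by auto
  have "transpose_mat U * (U * diag_of_list s * transpose_mat V) = (transpose_mat U * (U * diag_of_list s)) * transpose_mat V"
    using assoc_mult_mat[OF Ut mult_carrier_mat[OF Uc D] Vt] by simp
  also have "transpose_mat U * (U * diag_of_list s) = (transpose_mat U * U) * diag_of_list s"
    using assoc_mult_mat[OF Ut Uc D] by simp
  also have "\<dots> = diag_of_list s" using orth_left[OF U] left_mult_one_mat[OF D] by simp
  finally have "transpose_mat U * (U * diag_of_list s * transpose_mat V) * V = diag_of_list s * transpose_mat V * V" by simp
  also have "\<dots> = diag_of_list s * (transpose_mat V * V)" using assoc_mult_mat[OF D Vt Vc] by simp
  also have "\<dots> = diag_of_list s" using orth_left[OF V] right_mult_one_mat[OF D] by simp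
  finally show ?thesis .
qed

lemma unsandwich:
  fixes M :: "real mat"
  assumes U: "orthogonal_mat m U" and V: "orthogonal_mat m V" and M: "M \<in> carrier_mat m m"
    and eq: "transpose_mat U * M * V = D"
  shows "M = U * D * transpose_mat V"
proof -
  have Uc: "U \<in> carrier_mat m m" and Vc: "V \<in> carrier_mat m m" using U V orth_carrier by blast+
  have Ut: "transpose_mat U \<in> carrier_mat m m" and Vt: "transpose_mat V \<in> carrier_mat m m" using Uc Vc by auto
  have "U * D * transpose_mat V = U * (transpose_mat U * M * V) * transpose_mat V" using eq by simp
  also have "U * (transpose_mat U * M * V) = (U * (transpose_mat U * M)) * V"
    using assoc_mult_mat[OF Uc mult_carrier_mat[OF Ut M] Vc] by simp
  also have "U * (transpose_mat U * M) = (U * transpose_mat U) * M" using assoc_mult_mat[OF Uc Ut M] by simp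
  also have "\<dots> = M" using orth_right[OF U] M by simp
  also have "M * V * transpose_mat V = M * (V * transpose_mat V)" using assoc_mult_mat[OF M Vc Vt] by simp
  also have "\<dots> = M" using orth_right[OF V] M by simp
  finally show ?thesis ..
qed

lemma col_diag:
  assumes V: "(V :: real mat) \<in> carrier_mat m m" and len: "length t = m" and j: "j < m"
  shows "col (V * diag_of_list t) j = (t ! j) \<cdot>\<^sub>v col V j"
proof (rule eq_vecI)
  fix i assume "i < dim_vec ((t ! j) \<cdot>\<^sub>v col V j)"
  hence i: "i < m" using V by simp
  have D: "diag_of_list t \<in> carrier_mat m m" using len by auto
  have "col (V * diag_of_list t) j $ i = (V * diag_of_list t) $$ (i, j)" by (subst index_col) (use V D i j in auto)
  also have "\<dots> = (\<Sum>k<m. V $$ (i, k) * diag_of_list t $$ (k, j))" by (rule mult_entry[OF V D i j])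
  also have "\<dots> = (\<Sum>k<m. if k = j then V $$ (i, j) * t ! j else 0)"
    by (rule sum.cong[OF refl]) (use len j in \<open>auto simp: diag_index\<close>)
  also have "\<dots> = V $$ (i, j) * t ! j" using j by simp
  finally show "col (V * diag_of_list t) j $ i = ((t ! j) \<cdot>\<^sub>v col V j) $ i" using V i j by simp
qed (use V len in simp)

lemma svd_col:
  fixes M :: "real mat"
  assumes U: "orthogonal_mat m U" and V: "orthogonal_mat m V" and len: "length s = m"
    and M: "M = U * diag_of_list s * transpose_mat V" and j: "j < m"
  shows "M *\<^sub>v col V j = (s ! j) \<cdot>\<^sub>v col U j"
proof -
  have Uc: "U \<in> carrier_mat m m" and Vc: "V \<in> carrier_mat m m" using U V orth_carrier by blast+
  have Vt: "transpose_mat V \<in> carrier_mat m m" using Vc by auto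
  have D: "diag_of_list s \<in> carrier_mat m m" using len by auto
  have UD: "U * diag_of_list s \<in> carrier_mat m m" using Uc D by simp
  have Mc: "M \<in> carrier_mat m m" unfolding M using UD Vt by simp
  have "M * V = U * diag_of_list s * (transpose_mat V * V)" unfolding M using assoc_mult_mat[OF UD Vt Vc] by simp
  also have "\<dots> = U * diag_of_list s" using orth_left[OF V] right_mult_one_mat[OF UD] by simp
  finally have MV: "M * V = U * diag_of_list s" .
  have "M *\<^sub>v col V j = col (M * V) j" using col_mult2[OF Mc Vc j] by simp
  also have "\<dots> = (s ! j) \<cdot>\<^sub>v col U j" unfolding MV by (rule col_diag[OF Uc len j])
  finally show ?thesis .
qed

lemma eig_from_svd:
  fixes M :: "real mat"
  assumes U: "orthogonal_mat m U" and V: "orthogonal_mat m V" and len: "length s = m"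
    and M: "M = U * diag_of_list s * transpose_mat V" and j: "j < m"
  shows "eigenvalue (transpose_mat M * M) ((s ! j)\<^sup>2)"
proof -
  have Uc: "U \<in> carrier_mat m m" and Vc: "V \<in> carrier_mat m m" using U V orth_carrier by blast+
  have D: "diag_of_list s \<in> carrier_mat m m" using len by auto
  have UD: "U * diag_of_list s \<in> carrier_mat m m" using Uc D by simp
  have Mc: "M \<in> carrier_mat m m" unfolding M using UD Vc by simp
  have Ut: "transpose_mat U \<in> carrier_mat m m" and Vt: "transpose_mat V \<in> carrier_mat m m" using Uc Vc by auto
  have Mt: "transpose_mat M = V * diag_of_list s * transpose_mat U"
  proof -
    have "transpose_mat M = transpose_mat (transpose_mat V) * transpose_mat (U * diag_of_list s)"
      unfolding M by (rule transpose_mult[OF UD Vt])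
    also have "transpose_mat (U * diag_of_list s) = diag_of_list s * transpose_mat U"
      using transpose_mult[OF Uc D] by simp
    finally show ?thesis using assoc_mult_mat[OF Vc D Ut] by simp
  qed
  have "transpose_mat M * M *\<^sub>v col V j = transpose_mat M *\<^sub>v (M *\<^sub>v col V j)"
    using assoc_mult_mat_vec[of "transpose_mat M" m m M m "col V j"] Mc colc[OF Vc] by simp
  also have "M *\<^sub>v col V j = (s ! j) \<cdot>\<^sub>v col U j" by (rule svd_col[OF U V len M j])
  also have "transpose_mat M *\<^sub>v ((s ! j) \<cdot>\<^sub>v col U j) = (s ! j) \<cdot>\<^sub>v (transpose_mat M *\<^sub>v col U j)"
    using Mc colc[OF Uc] by (simp add: mult_mat_vec)
  also have "transpose_mat M *\<^sub>v col U j = (s ! j) \<cdot>\<^sub>v col V j" by (rule svd_col[OF V U len Mt j])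
  also have "(s ! j) \<cdot>\<^sub>v ((s ! j) \<cdot>\<^sub>v col V j) = (s ! j)\<^sup>2 \<cdot>\<^sub>v col V j"
    by (simp add: smult_smult_assoc power2_eq_square)
  finally have ev: "transpose_mat M * M *\<^sub>v col V j = (s ! j)\<^sup>2 \<cdot>\<^sub>v col V j" .
  have "col V j \<noteq> 0\<^sub>v m"
  proof
    assume "col V j = 0\<^sub>v m"
    hence "col V j \<bullet> col V j = 0" by simp
    thus False using orth_col_dot[OF V j j] by simp
  qed
  hence "eigenvector (transpose_mat M * M) (col V j) ((s ! j)\<^sup>2)"
    unfolding eigenvector_def using ev colc[OF Vc] Mc by simp
  thus ?thesis unfolding eigenvalue_def by blast
qed


lemma sandwich_assoc:
  fixes A B M C D :: "real mat"
  assumes A: "A \<in> carrier_mat n n" and B: "B \<in> carrier_mat n n" and M: "M \<in> carrier_mat n n"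
    and C: "C \<in> carrier_mat n n" and D: "D \<in> carrier_mat n n"
  shows "(A * B) * M * (C * D) = A * (B * M * C) * D"
proof -
  have BM: "B * M \<in> carrier_mat n n" using B M by simp
  have "(A * B) * M * (C * D) = (A * (B * M)) * (C * D)" using assoc_mult_mat[OF A B M] by simp
  also have "\<dots> = ((A * (B * M)) * C) * D"
    using assoc_mult_mat[OF mult_carrier_mat[OF A BM] C D] by simp
  also have "(A * (B * M)) * C = A * (B * M * C)" using assoc_mult_mat[OF A BM C] by simp
  finally show ?thesis .
qed

lemma svd_exists:
  fixes M :: "real mat"
  assumes "M \<in> carrier_mat m m"
  shows "\<exists>s U V. length s = m \<and> sorted s \<and> (\<forall>x\<in>set s. 0 \<le> x) \<and> orthogonal_mat m U \<and> orthogonal_mat m V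
            \<and> M = U * diag_of_list s * transpose_mat V"
  using assms
proof (induction m arbitrary: M)
  case 0
  have "M = 1\<^sub>m 0 * diag_of_list [] * transpose_mat (1\<^sub>m 0)"
    by (rule eq_matI) (use 0 in \<open>auto simp: diag_of_list_def\<close>)
  thus ?case using orth_one[of 0] by (intro exI[of _ "[]"] exI[of _ "1\<^sub>m 0"]) auto
next
  case (Suc k)
  have M: "M \<in> carrier_mat (Suc k) (Suc k)" by fact
  obtain \<sigma> u v where sg: "0 \<le> \<sigma>" and u: "u \<in> carrier_vec (Suc k)" and v: "v \<in> carrier_vec (Suc k)"
    and uu: "u \<bullet> u = 1" and vv: "v \<bullet> v = 1" and e1: "M *\<^sub>v v = \<sigma> \<cdot>\<^sub>v u"
    and e2: "transpose_mat M *\<^sub>v u = \<sigma> \<cdot>\<^sub>v v"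
    and emin: "\<forall>\<mu>. eigenvalue (transpose_mat M * M) \<mu> \<longrightarrow> \<sigma>\<^sup>2 \<le> \<mu>"
    using sv_pair[OF M] by blast
  obtain U where U: "orthogonal_mat (Suc k) U" and cu: "col U 0 = u" using orth_complete[OF u uu] by blast
  obtain V where V: "orthogonal_mat (Suc k) V" and cv: "col V 0 = v" using orth_complete[OF v vv] by blast
  define M' where "M' = mat k k (\<lambda>(i, j). (transpose_mat U * M * V) $$ (Suc i, Suc j))"
  have A': "transpose_mat U * M * V = four_block_mat (mat 1 1 (\<lambda>_. \<sigma>)) (0\<^sub>m 1 k) (0\<^sub>m k 1) M'"
    unfolding M'_def by (rule deflate[OF M U V cu cv e1 e2])
  have M'c: "M' \<in> carrier_mat k k" by (simp add: M'_def)
  obtain s' U' V' where len': "length s' = k" and srt': "sorted s'" and nn': "\<forall>x\<in>set s'. 0 \<le> x"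
    and U': "orthogonal_mat k U'" and V': "orthogonal_mat k V'" and M': "M' = U' * diag_of_list s' * transpose_mat V'"
    using Suc.IH[OF M'c] by blast
  have U'c: "U' \<in> carrier_mat k k" and V'c: "V' \<in> carrier_mat k k" using U' V' orth_carrier by blast+
  define EU where "EU = four_block_mat (1\<^sub>m 1) (0\<^sub>m 1 k) (0\<^sub>m k 1) U'"
  define EV where "EV = four_block_mat (1\<^sub>m 1) (0\<^sub>m 1 k) (0\<^sub>m k 1) V'"
  have EU: "orthogonal_mat (Suc k) EU" unfolding EU_def by (rule E_orth[OF U'])
  have EV: "orthogonal_mat (Suc k) EV" unfolding EV_def by (rule E_orth[OF V'])
  define U2 where "U2 = U * EU"
  define V2 where "V2 = V * EV"
  have U2: "orthogonal_mat (Suc k) U2" unfolding U2_def by (rule orth_mult[OF U EU])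
  have V2: "orthogonal_mat (Suc k) V2" unfolding V2_def by (rule orth_mult[OF V EV])
  have Uc: "U \<in> carrier_mat (Suc k) (Suc k)" using U by (rule orth_carrier)
  have Vc: "V \<in> carrier_mat (Suc k) (Suc k)" using V by (rule orth_carrier)
  have EUc: "EU \<in> carrier_mat (Suc k) (Suc k)" using EU by (rule orth_carrier)
  have EVc: "EV \<in> carrier_mat (Suc k) (Suc k)" using EV by (rule orth_carrier)
  have "transpose_mat U2 * M * V2 = (transpose_mat EU * transpose_mat U) * M * (V * EV)"
    unfolding U2_def V2_def using transpose_mult[OF Uc EUc] by simp
  also have "\<dots> = transpose_mat EU * (transpose_mat U * M * V) * EV"
    by (rule sandwich_assoc) (use EUc Uc M Vc EVc in auto)
  also have "\<dots> = four_block_mat (mat 1 1 (\<lambda>_. \<sigma>)) (0\<^sub>m 1 k) (0\<^sub>m k 1) (transpose_mat U' * M' * V')"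
    unfolding A' EU_def EV_def by (rule E_sandwich[OF U'c V'c M'c])
  also have "transpose_mat U' * M' * V' = diag_of_list s'"
    unfolding M' by (rule svd_diag[OF U' V' len'])
  also have "four_block_mat (mat 1 1 (\<lambda>_. \<sigma>)) (0\<^sub>m 1 k) (0\<^sub>m k 1) (diag_of_list s') = diag_of_list (\<sigma> # s')"
    using diag_cons[of \<sigma> s'] len' by simp
  finally have "transpose_mat U2 * M * V2 = diag_of_list (\<sigma> # s')" .
  hence Meq: "M = U2 * diag_of_list (\<sigma> # s') * transpose_mat V2" by (rule unsandwich[OF U2 V2 M])
  have lenS: "length (\<sigma> # s') = Suc k" using len' by simp
  have ge: "\<sigma> \<le> x" if x: "x \<in> set s'" for x
  proof -
    obtain i where i: "i < k" and xi: "x = s' ! i" using x len' by (metis in_set_conv_nth)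
    have "eigenvalue (transpose_mat M * M) (((\<sigma> # s') ! Suc i)\<^sup>2)"
      by (rule eig_from_svd[OF U2 V2 lenS Meq]) (use i in simp)
    hence "\<sigma>\<^sup>2 \<le> x\<^sup>2" using emin xi by simp
    moreover have "0 \<le> x" using nn' x by simp
    ultimately show ?thesis by (rule power2_le_imp_le)
  qed
  have "sorted (\<sigma> # s')" using srt' ge by simp
  moreover have "\<forall>x\<in>set (\<sigma> # s'). 0 \<le> x" using sg nn' by simp
  ultimately show ?case using lenS U2 V2 Meq by blast
qed


lemma svd_transpose:
  fixes M :: "real mat"
  assumes U: "orthogonal_mat m U" and V: "orthogonal_mat m V" and len: "length s = m"
    and M: "M = U * diag_of_list s * transpose_mat V"
  shows "transpose_mat M = V * diag_of_list s * transpose_mat U"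
proof -
  have Uc: "U \<in> carrier_mat m m" and Vc: "V \<in> carrier_mat m m" using U V orth_carrier by blast+
  have D: "diag_of_list s \<in> carrier_mat m m" using len by auto
  have UD: "U * diag_of_list s \<in> carrier_mat m m" using Uc D by simp
  have Ut: "transpose_mat U \<in> carrier_mat m m" and Vt: "transpose_mat V \<in> carrier_mat m m" using Uc Vc by auto
  have "transpose_mat M = transpose_mat (transpose_mat V) * transpose_mat (U * diag_of_list s)"
    unfolding M by (rule transpose_mult[OF UD Vt])
  also have "transpose_mat (U * diag_of_list s) = diag_of_list s * transpose_mat U"
    using transpose_mult[OF Uc D] by simp
  finally show ?thesis using assoc_mult_mat[OF Vc D Ut] by simp
qed

lemma diag_sq: "diag_of_list s * diag_of_list s = diag_of_list (map (\<lambda>x. x\<^sup>2) s)"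
proof (rule eq_matI)
  fix i j assume i: "i < dim_row (diag_of_list (map (\<lambda>x. x\<^sup>2) s))" and j: "j < dim_col (diag_of_list (map (\<lambda>x. x\<^sup>2) s))"
  hence i: "i < length s" and j: "j < length s" by auto
  have "(diag_of_list s * diag_of_list s) $$ (i, j) = (\<Sum>k<length s. diag_of_list s $$ (i, k) * diag_of_list s $$ (k, j))"
    by (rule mult_entry[OF diag_carrier diag_carrier i j])
  also have "\<dots> = (\<Sum>k<length s. if k = i then (if i = j then (s ! i)\<^sup>2 else 0) else 0)"
    by (rule sum.cong[OF refl]) (use i j in \<open>auto simp: diag_index power2_eq_square\<close>)
  also have "\<dots> = diag_of_list (map (\<lambda>x. x\<^sup>2) s) $$ (i, j)" using i j by (simp add: diag_index)
  finally show "(diag_of_list s * diag_of_list s) $$ (i, j) = diag_of_list (map (\<lambda>x. x\<^sup>2) s) $$ (i, j)" .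
qed auto

lemma MtM_form:
  fixes M :: "real mat"
  assumes U: "orthogonal_mat m U" and V: "orthogonal_mat m V" and len: "length s = m"
    and M: "M = U * diag_of_list s * transpose_mat V"
  shows "transpose_mat M * M = V * diag_of_list (map (\<lambda>x. x\<^sup>2) s) * transpose_mat V"
proof -
  have Uc: "U \<in> carrier_mat m m" and Vc: "V \<in> carrier_mat m m" using U V orth_carrier by blast+
  have D: "diag_of_list s \<in> carrier_mat m m" using len by auto
  have Ut: "transpose_mat U \<in> carrier_mat m m" and Vt: "transpose_mat V \<in> carrier_mat m m" using Uc Vc by auto
  have VD: "V * diag_of_list s \<in> carrier_mat m m" using Vc D by simp
  have DV: "diag_of_list s * transpose_mat V \<in> carrier_mat m m" using Vt D by simp
  have M2: "M = U * (diag_of_list s * transpose_mat V)" unfolding M using assoc_mult_mat[OF Uc D Vt] .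
  have Mt: "transpose_mat M = (V * diag_of_list s) * transpose_mat U" by (rule svd_transpose[OF U V len M])
  have "transpose_mat M * M = (V * diag_of_list s) * transpose_mat U * (U * (diag_of_list s * transpose_mat V))"
    using arg_cong2[of _ _ _ _ "(*)", OF Mt M2] .
  also have "\<dots> = (V * diag_of_list s) * (transpose_mat U * (U * (diag_of_list s * transpose_mat V)))"
    using assoc_mult_mat[OF VD Ut mult_carrier_mat[OF Uc DV]] .
  also have "transpose_mat U * (U * (diag_of_list s * transpose_mat V)) = (transpose_mat U * U) * (diag_of_list s * transpose_mat V)"
    using assoc_mult_mat[OF Ut Uc DV] by simp
  also have "\<dots> = diag_of_list s * transpose_mat V" using orth_left[OF U] left_mult_one_mat[OF DV] by simp
  also have "(V * diag_of_list s) * (diag_of_list s * transpose_mat V) = V * (diag_of_list s * (diag_of_list s * transpose_mat V))"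
    using assoc_mult_mat[OF Vc D DV] .
  also have "diag_of_list s * (diag_of_list s * transpose_mat V) = (diag_of_list s * diag_of_list s) * transpose_mat V"
    using assoc_mult_mat[OF D D Vt] by simp
  also have "V * ((diag_of_list s * diag_of_list s) * transpose_mat V) = V * (diag_of_list s * diag_of_list s) * transpose_mat V"
    using assoc_mult_mat[OF Vc mult_carrier_mat[OF D D] Vt] by simp
  finally show ?thesis unfolding diag_sq .
qed

lemma diag_mat_diag: "diag_mat (diag_of_list t) = t"
  by (rule nth_equalityI) (auto simp: diag_mat_def diag_index)

lemma char_poly_sim_diag:
  assumes V: "orthogonal_mat m V" and len: "length t = m"
  shows "char_poly (V * diag_of_list t * transpose_mat V) = (\<Prod>a\<leftarrow>t. [:- a, 1:])"
proof -
  have Vc: "V \<in> carrier_mat m m" using V by (rule orth_carrier)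
  have D: "diag_of_list t \<in> carrier_mat m m" using len by auto
  have "similar_mat_wit (V * diag_of_list t * transpose_mat V) (diag_of_list t) V (transpose_mat V)"
    unfolding similar_mat_wit_def Let_def using Vc D orth_left[OF V] orth_right[OF V] by auto
  hence "similar_mat (V * diag_of_list t * transpose_mat V) (diag_of_list t)" unfolding similar_mat_def by blast
  hence "char_poly (V * diag_of_list t * transpose_mat V) = char_poly (diag_of_list t)" by (rule char_poly_similar)
  also have "\<dots> = (\<Prod>a\<leftarrow>diag_mat (diag_of_list t). [:- a, 1:])"
    by (rule char_poly_upper_triangular[OF D]) (auto simp: upper_triangular_def diag_index)
  finally show ?thesis unfolding diag_mat_diag .
qed

lemma order_prod_linear:
  fixes as :: "real list"
  shows "order x (\<Prod>a\<leftarrow>as. [:- a, 1:]) = count (mset as) x"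
proof (induction as)
  case Nil thus ?case by (simp add: order_0I)
next
  case (Cons a as)
  have nz: "(\<Prod>a\<leftarrow>as. [:- a, 1:]) \<noteq> (0 :: real poly)" by (auto simp: prod_list_zero_iff)
  have lin: "[:- a, 1:] \<noteq> (0 :: real poly)" by simp
  have nz2: "[:- a, 1:] * (\<Prod>a\<leftarrow>as. [:- a, 1:]) \<noteq> (0 :: real poly)" using lin nz no_zero_divisors by blast
  have "order x (\<Prod>a\<leftarrow>a # as. [:- a, 1:]) = order x [:- a, 1:] + order x (\<Prod>a\<leftarrow>as. [:- a, 1:])"
    using order_mult[OF nz2] by simp
  also have "order x [:- a, 1:] = (if a = x then 1 else 0)" by (simp add: order_linear')
  finally show ?case using Cons.IH by simp
qed

lemma svd_unique:
  assumes U1: "orthogonal_mat m U1" and V1: "orthogonal_mat m V1" and len1: "length s1 = m"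
    and srt1: "sorted s1" and nn1: "\<forall>x\<in>set s1. 0 \<le> x"
    and U2: "orthogonal_mat m U2" and V2: "orthogonal_mat m V2" and len2: "length s2 = m"
    and srt2: "sorted s2" and nn2: "\<forall>x\<in>set s2. 0 \<le> x"
    and eq: "U1 * diag_of_list s1 * transpose_mat V1 = U2 * diag_of_list s2 * transpose_mat V2"
  shows "s1 = s2"
proof -
  define M where "M = U1 * diag_of_list s1 * transpose_mat V1"
  have M1: "M = U1 * diag_of_list s1 * transpose_mat V1" by (simp add: M_def)
  have M2: "M = U2 * diag_of_list s2 * transpose_mat V2" using eq by (simp add: M_def)
  have "char_poly (transpose_mat M * M) = (\<Prod>a\<leftarrow>map (\<lambda>x. x\<^sup>2) s1. [:- a, 1:])"
    unfolding MtM_form[OF U1 V1 len1 M1] by (rule char_poly_sim_diag[OF V1]) (simp add: len1)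
  moreover have "char_poly (transpose_mat M * M) = (\<Prod>a\<leftarrow>map (\<lambda>x. x\<^sup>2) s2. [:- a, 1:])"
    unfolding MtM_form[OF U2 V2 len2 M2] by (rule char_poly_sim_diag[OF V2]) (simp add: len2)
  ultimately have "(\<Prod>a\<leftarrow>map (\<lambda>x. x\<^sup>2) s1. [:- a, 1:]) = (\<Prod>a\<leftarrow>map (\<lambda>x. x\<^sup>2) s2. [:- a, 1:] :: real poly)" by simp
  hence "\<And>x. count (mset (map (\<lambda>x. x\<^sup>2) s1)) x = count (mset (map (\<lambda>x. x\<^sup>2) s2)) x"
    by (metis order_prod_linear)
  hence sq: "mset (map (\<lambda>x. x\<^sup>2) s1) = mset (map (\<lambda>x. x\<^sup>2) s2)" by (rule multiset_eqI)
  have sqback: "map sqrt (map (\<lambda>x. x\<^sup>2) s) = s" if "\<forall>x\<in>set s. 0 \<le> x" for s :: "real list"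
    using that by (induction s) auto
  have "mset s1 = mset (map sqrt (map (\<lambda>x. x\<^sup>2) s1))" using sqback[OF nn1] by simp
  also have "\<dots> = image_mset sqrt (mset (map (\<lambda>x. x\<^sup>2) s1))" by (rule mset_map)
  also have "\<dots> = image_mset sqrt (mset (map (\<lambda>x. x\<^sup>2) s2))" unfolding sq ..
  also have "\<dots> = mset (map sqrt (map (\<lambda>x. x\<^sup>2) s2))" by (rule mset_map[symmetric])
  also have "\<dots> = mset s2" using sqback[OF nn2] by simp
  finally have "mset s1 = mset s2" .
  hence "sort s2 = s1" using srt1 by (rule properties_for_sort)
  thus ?thesis using srt2 by (simp add: sorted_sort_id)
qed

lemma sv_props:
  fixes M :: "real mat"
  assumes M: "M \<in> carrier_mat m m"
  shows "length (singular_values M) = m \<and> sorted (singular_values M) \<and> (\<forall>x\<in>set (singular_values M). 0 \<le> x) \<and>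
         (\<exists>U V. orthogonal_mat m U \<and> orthogonal_mat m V \<and> M = U * diag_of_list (singular_values M) * transpose_mat V)"
proof -
  have dr: "dim_row M = m" using M by simp
  let ?P = "\<lambda>s. length s = m \<and> sorted s \<and> (\<forall>x \<in> set s. 0 \<le> x) \<and>
      (\<exists>U V. orthogonal_mat m U \<and> orthogonal_mat m V \<and> M = U * diag_of_list s * transpose_mat V)"
  have ex: "\<exists>s. ?P s" using svd_exists[OF M] by blast
  have uq: "\<exists>!s. ?P s"
  proof (rule ex_ex1I[OF ex])
    fix s1 s2 assume "?P s1" "?P s2"
    thus "s1 = s2" using svd_unique by metis
  qed
  have "singular_values M = (THE s. ?P s)" unfolding singular_values_def dr ..
  moreover have "?P (THE s. ?P s)" by (rule theI'[OF uq])
  ultimately show ?thesis by simp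
qed


lemma sum_shift_sigma: "(\<Sum>i = 2..(m::nat). f (i - 1)) = (\<Sum>i\<in>{1..<m}. (f i :: real))"
proof (induction m)
  case 0 thus ?case by simp
next
  case (Suc m)
  show ?case
  proof (cases "m = 0")
    case True thus ?thesis by simp
  next
    case False
    have "{2..Suc m} = insert (Suc m) {2..m}" using False by auto
    hence "(\<Sum>i = 2..Suc m. f (i - 1)) = f m + (\<Sum>i = 2..m. f (i - 1))" by simp
    moreover have "{1..<Suc m} = insert m {1..<m}" using False by auto
    hence "(\<Sum>i\<in>{1..<Suc m}. f i) = f m + (\<Sum>i\<in>{1..<m}. f i)" by simp
    ultimately show ?thesis using Suc.IH by simp
  qed
qed

lemma g_alt: "(\<Sum>i = 2..m. sigma M i) = (\<Sum>i\<in>{1..<m}. singular_values M ! i)"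
  unfolding sigma_def by (rule sum_shift_sigma)

lemma WXZ_entry:
  fixes X :: "real mat"
  assumes W: "W \<in> carrier_mat m m" and X: "X \<in> carrier_mat m m" and Z: "Z \<in> carrier_mat m m"
    and i: "i < m" and j: "j < m"
  shows "(transpose_mat W * X * Z) $$ (i, j) = (\<Sum>a<m. \<Sum>b<m. W $$ (a, i) * X $$ (a, b) * Z $$ (b, j))"
proof -
  have Wt: "transpose_mat W \<in> carrier_mat m m" using W by simp
  have "(transpose_mat W * X * Z) $$ (i, j) = (\<Sum>b<m. (transpose_mat W * X) $$ (i, b) * Z $$ (b, j))"
    by (rule mult_entry[OF mult_carrier_mat[OF Wt X] Z i j])
  also have "\<dots> = (\<Sum>b<m. (\<Sum>a<m. W $$ (a, i) * X $$ (a, b)) * Z $$ (b, j))"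
  proof (rule sum.cong[OF refl])
    fix b assume b: "b \<in> {..<m}"
    have "(transpose_mat W * X) $$ (i, b) = (\<Sum>a<m. transpose_mat W $$ (i, a) * X $$ (a, b))"
      by (rule mult_entry[OF Wt X i]) (use b in simp)
    also have "\<dots> = (\<Sum>a<m. W $$ (a, i) * X $$ (a, b))"
      by (rule sum.cong[OF refl]) (use W i in simp)
    finally show "(transpose_mat W * X) $$ (i, b) * Z $$ (b, j) = (\<Sum>a<m. W $$ (a, i) * X $$ (a, b)) * Z $$ (b, j)" by simp
  qed
  also have "\<dots> = (\<Sum>a<m. \<Sum>b<m. W $$ (a, i) * X $$ (a, b) * Z $$ (b, j))"
    by (simp add: sum_distrib_right) (rule sum.swap)
  finally show ?thesis .
qed

lemma WXZ_affine:
  fixes M1 M2 :: "real mat"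
  assumes W: "W \<in> carrier_mat m m" and M1: "M1 \<in> carrier_mat m m" and M2: "M2 \<in> carrier_mat m m"
    and Z: "Z \<in> carrier_mat m m" and i: "i < m"
  shows "(transpose_mat W * (t \<cdot>\<^sub>m M1 + (1 - t) \<cdot>\<^sub>m M2) * Z) $$ (i, i)
     = t * (transpose_mat W * M1 * Z) $$ (i, i) + (1 - t) * (transpose_mat W * M2 * Z) $$ (i, i)"
proof -
  have C: "t \<cdot>\<^sub>m M1 + (1 - t) \<cdot>\<^sub>m M2 \<in> carrier_mat m m" using M1 M2 by simp
  have e: "(t \<cdot>\<^sub>m M1 + (1 - t) \<cdot>\<^sub>m M2) $$ (a, b) = t * M1 $$ (a, b) + (1 - t) * M2 $$ (a, b)"
    if "a < m" "b < m" for a b using that M1 M2 by simp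
  show ?thesis
    unfolding WXZ_entry[OF W C Z i i] WXZ_entry[OF W M1 Z i i] WXZ_entry[OF W M2 Z i i]
    by (simp add: e sum_distrib_left sum.distrib[symmetric] algebra_simps)
qed

lemma g_convex:
  fixes M1 M2 :: "real mat"
  assumes M1: "M1 \<in> carrier_mat m m" and M2: "M2 \<in> carrier_mat m m" and t0: "0 \<le> t" and t1: "t \<le> 1"
  shows "(\<Sum>i = 2..m. sigma (t \<cdot>\<^sub>m M1 + (1 - t) \<cdot>\<^sub>m M2) i)
     \<le> t * (\<Sum>i = 2..m. sigma M1 i) + (1 - t) * (\<Sum>i = 2..m. sigma M2 i)"
proof -
  define M where "M = t \<cdot>\<^sub>m M1 + (1 - t) \<cdot>\<^sub>m M2"
  have Mc: "M \<in> carrier_mat m m" unfolding M_def using M1 M2 by simp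
  obtain W Z where W: "orthogonal_mat m W" and Z: "orthogonal_mat m Z"
    and Meq: "M = W * diag_of_list (singular_values M) * transpose_mat Z"
    and lenM: "length (singular_values M) = m"
    using sv_props[OF Mc] by blast
  obtain U1 V1 where U1: "orthogonal_mat m U1" and V1: "orthogonal_mat m V1"
    and M1eq: "M1 = U1 * diag_of_list (singular_values M1) * transpose_mat V1"
    and len1: "length (singular_values M1) = m" and srt1: "sorted (singular_values M1)"
    and nn1: "\<forall>x\<in>set (singular_values M1). 0 \<le> x"
    using sv_props[OF M1] by blast
  obtain U2 V2 where U2: "orthogonal_mat m U2" and V2: "orthogonal_mat m V2"
    and M2eq: "M2 = U2 * diag_of_list (singular_values M2) * transpose_mat V2"
    and len2: "length (singular_values M2) = m" and srt2: "sorted (singular_values M2)"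
    and nn2: "\<forall>x\<in>set (singular_values M2). 0 \<le> x"
    using sv_props[OF M2] by blast
  have Wc: "W \<in> carrier_mat m m" and Zc: "Z \<in> carrier_mat m m" using W Z orth_carrier by blast+
  have "(\<Sum>i\<in>{1..<m}. singular_values M ! i) = (\<Sum>i\<in>{1..<m}. (transpose_mat W * M * Z) $$ (i, i))"
  proof (rule sum.cong[OF refl])
    fix i assume i: "i \<in> {1..<m}"
    have "transpose_mat W * M * Z = diag_of_list (singular_values M)"
      using svd_diag[OF W Z lenM] Meq by simp
    thus "singular_values M ! i = (transpose_mat W * M * Z) $$ (i, i)" using i lenM by (simp add: diag_index)
  qed
  also have "\<dots> = t * (\<Sum>i\<in>{1..<m}. (transpose_mat W * M1 * Z) $$ (i, i)) + (1 - t) * (\<Sum>i\<in>{1..<m}. (transpose_mat W * M2 * Z) $$ (i, i))"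
    unfolding M_def sum_distrib_left sum.distrib[symmetric]
    by (rule sum.cong[OF refl], rule WXZ_affine[OF Wc M1 M2 Zc]) auto
  also have "\<dots> \<le> t * (\<Sum>i\<in>{1..<m}. singular_values M1 ! i) + (1 - t) * (\<Sum>i\<in>{1..<m}. singular_values M2 ! i)"
  proof (rule add_mono; rule mult_left_mono)
    show "(\<Sum>i\<in>{1..<m}. (transpose_mat W * M1 * Z) $$ (i, i)) \<le> (\<Sum>i\<in>{1..<m}. singular_values M1 ! i)"
      using kyfan[OF W Z U1 V1 len1 srt1 nn1] M1eq by simp
    show "(\<Sum>i\<in>{1..<m}. (transpose_mat W * M2 * Z) $$ (i, i)) \<le> (\<Sum>i\<in>{1..<m}. singular_values M2 ! i)"
      using kyfan[OF W Z U2 V2 len2 srt2 nn2] M2eq by simp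
  qed (use t0 t1 in auto)
  finally show ?thesis unfolding g_alt M_def .
qed



lemma bm_carrier[simp]: "block_mat n N P f \<in> carrier_mat (n * N) (n * N)"
  by (simp add: block_mat_def)

lemma bm_dims[simp]: "dim_row (block_mat n N P f) = n * N" "dim_col (block_mat n N P f) = n * N"
  by (simp_all add: block_mat_def)

lemma bm_index:
  "r < n * N \<Longrightarrow> c < n * N \<Longrightarrow> block_mat n N P f $$ (r, c) =
     (if P (r div n) (c div n) then f (r div n) (c div n) $$ (r mod n, c mod n) else 0)"
  by (simp add: block_mat_def)

lemma sum_add_range: "(\<Sum>r<a + (n::nat). g r) = (\<Sum>r<a. g r) + (\<Sum>b<n. (g (a + b) :: 'a :: comm_monoid_add))"
  by (induction n) (auto simp: algebra_simps)

lemma sum_blocks: "(\<Sum>r<n * (N::nat). g r) = (\<Sum>l<N. \<Sum>b<n. (g (l * n + b) :: 'a :: comm_monoid_add))"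
proof (induction N)
  case 0 thus ?case by simp
next
  case (Suc N)
  have "(\<Sum>r<n * Suc N. g r) = (\<Sum>r<n * N + n. g r)" by (simp add: algebra_simps)
  also have "\<dots> = (\<Sum>r<n * N. g r) + (\<Sum>b<n. g (n * N + b))" by (rule sum_add_range)
  finally show ?case using Suc.IH by (simp add: algebra_simps)
qed

lemma divmod_block: "b < (n::nat) \<Longrightarrow> (l * n + b) div n = l" "b < n \<Longrightarrow> (l * n + b) mod n = b"
  by auto

lemma block_lt: "l < N \<Longrightarrow> b < (n::nat) \<Longrightarrow> l * n + b < n * N"
proof -
  assume "l < N" "b < n"
  hence "l * n + b < l * n + n" by simp
  also have "\<dots> = (Suc l) * n" by simp
  also have "\<dots> \<le> N * n" using \<open>l < N\<close> by (intro mult_right_mono) auto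
  finally show ?thesis by (simp add: mult.commute)
qed

lemma bm_mult_index:
  assumes f: "\<And>k l. f k l \<in> carrier_mat n n" and g: "\<And>k l. g k l \<in> carrier_mat n n"
    and r: "r < n * N" and c: "c < n * N"
  shows "(block_mat n N P f * block_mat n N Q g) $$ (r, c) =
    (\<Sum>l<N. if P (r div n) l \<and> Q l (c div n) then (f (r div n) l * g l (c div n)) $$ (r mod n, c mod n) else 0)"
proof -
  have n: "0 < n" using r by (cases n) auto
  have "(block_mat n N P f * block_mat n N Q g) $$ (r, c) = (\<Sum>x<n * N. block_mat n N P f $$ (r, x) * block_mat n N Q g $$ (x, c))"
    by (rule mult_entry[OF bm_carrier bm_carrier r c])
  also have "\<dots> = (\<Sum>l<N. \<Sum>b<n. block_mat n N P f $$ (r, l * n + b) * block_mat n N Q g $$ (l * n + b, c))"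
    by (rule sum_blocks)
  also have "\<dots> = (\<Sum>l<N. if P (r div n) l \<and> Q l (c div n) then (f (r div n) l * g l (c div n)) $$ (r mod n, c mod n) else 0)"
  proof (rule sum.cong[OF refl])
    fix l assume l: "l \<in> {..<N}"
    have rm: "r mod n < n" using n by simp
    have cm: "c mod n < n" using n by simp
    have "(\<Sum>b<n. block_mat n N P f $$ (r, l * n + b) * block_mat n N Q g $$ (l * n + b, c))
       = (\<Sum>b<n. (if P (r div n) l \<and> Q l (c div n) then f (r div n) l $$ (r mod n, b) * g l (c div n) $$ (b, c mod n) else 0))"
      by (rule sum.cong[OF refl]) (use l r c block_lt in \<open>auto simp: bm_index\<close>)
    also have "\<dots> = (if P (r div n) l \<and> Q l (c div n) then (f (r div n) l * g l (c div n)) $$ (r mod n, c mod n) else 0)"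
      using mult_entry[OF f g rm cm] by auto
    finally show "(\<Sum>b<n. block_mat n N P f $$ (r, l * n + b) * block_mat n N Q g $$ (l * n + b, c)) = \<dots>" .
  qed
  finally show ?thesis .
qed


definition Tm :: "nat \<Rightarrow> nat \<Rightarrow> real mat \<Rightarrow> real mat" where
  "Tm n N A = block_mat n N (\<lambda>k l. l \<le> k) (\<lambda>k l. A ^\<^sub>m (k - l))"

definition Ti :: "nat \<Rightarrow> nat \<Rightarrow> real mat \<Rightarrow> real mat" where
  "Ti n N A = block_mat n N (\<lambda>k l. k = l \<or> k = Suc l) (\<lambda>k l. if k = l then 1\<^sub>m n else - A)"

lemma Tm_c[simp]: "Tm n N A \<in> carrier_mat (n * N) (n * N)" by (simp add: Tm_def)
lemma Ti_c[simp]: "Ti n N A \<in> carrier_mat (n * N) (n * N)" by (simp add: Ti_def)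
lemma Fex_c[simp]: "F_ex n N A D \<in> carrier_mat (n * N) (n * N)" by (simp add: F_ex_def)
lemma Fa_c[simp]: "F_a n N A D \<in> carrier_mat (n * N) (n * N)" by (simp add: F_a_def)
lemma kron_c[simp]: "kron_id n N A \<in> carrier_mat (n * N) (n * N)" by (simp add: kron_id_def)

lemma dims_simps[simp]:
  "dim_row (Tm n N A) = n * N" "dim_col (Tm n N A) = n * N"
  "dim_row (Ti n N A) = n * N" "dim_col (Ti n N A) = n * N"
  "dim_row (F_ex n N A D) = n * N" "dim_col (F_ex n N A D) = n * N"
  "dim_row (F_a n N A D) = n * N" "dim_col (F_a n N A D) = n * N"
  "dim_row (kron_id n N A) = n * N" "dim_col (kron_id n N A) = n * N"
  by (simp_all add: Tm_def Ti_def F_ex_def F_a_def kron_id_def)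

lemma rc_decomp: "r < n * N \<Longrightarrow> r div n < N \<and> r mod n < (n::nat)"
  by (metis div_less_iff_less_mult mod_less_divisor mult.commute nat_0_less_mult_iff zero_less_iff_neq_zero gr_implies_not0)

lemma Fa_T:
  assumes A: "A \<in> carrier_mat n n" and B: "B \<in> carrier_mat n n"
  shows "F_a n N A B = Tm n N A * kron_id n N B"
proof (rule eq_matI)
  fix r c assume r: "r < dim_row (Tm n N A * kron_id n N B)" and c: "c < dim_col (Tm n N A * kron_id n N B)"
  hence r: "r < n * N" and c: "c < n * N" by (simp_all add: Tm_def kron_id_def)
  have cd: "c div n < N" using rc_decomp[OF c] by simp
  have "(Tm n N A * kron_id n N B) $$ (r, c) =
     (\<Sum>l<N. if l \<le> r div n \<and> l = c div n then (A ^\<^sub>m (r div n - l) * B) $$ (r mod n, c mod n) else 0)"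
    unfolding Tm_def kron_id_def by (rule bm_mult_index[OF _ _ r c]) (use A B in auto)
  also have "\<dots> = (\<Sum>l<N. if l = c div n then (if c div n \<le> r div n then (A ^\<^sub>m (r div n - c div n) * B) $$ (r mod n, c mod n) else 0) else 0)"
    by (rule sum.cong[OF refl]) auto
  also have "\<dots> = (if c div n \<le> r div n then (A ^\<^sub>m (r div n - c div n) * B) $$ (r mod n, c mod n) else 0)"
    using cd by (simp add: sum.delta)
  also have "\<dots> = F_a n N A B $$ (r, c)" unfolding F_a_def using r c by (simp add: bm_index)
  finally show "F_a n N A B $$ (r, c) = (Tm n N A * kron_id n N B) $$ (r, c)" by (rule sym)
qed (auto simp: F_a_def Tm_def kron_id_def)

lemma kron_mult:
  assumes M: "M \<in> carrier_mat n n" and M': "M' \<in> carrier_mat n n"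
  shows "kron_id n N M * kron_id n N M' = kron_id n N (M * M')"
proof (rule eq_matI)
  fix r c assume r: "r < dim_row (kron_id n N (M * M'))" and c: "c < dim_col (kron_id n N (M * M'))"
  hence r: "r < n * N" and c: "c < n * N" by (simp_all add: kron_id_def)
  have cd: "c div n < N" using rc_decomp[OF c] by simp
  have "(kron_id n N M * kron_id n N M') $$ (r, c) =
     (\<Sum>l<N. if r div n = l \<and> l = c div n then (M * M') $$ (r mod n, c mod n) else 0)"
    unfolding kron_id_def by (rule bm_mult_index[OF _ _ r c]) (use M M' in auto)
  also have "\<dots> = (\<Sum>l<N. if l = c div n then (if r div n = c div n then (M * M') $$ (r mod n, c mod n) else 0) else 0)"
    by (rule sum.cong[OF refl]) auto
  also have "\<dots> = kron_id n N (M * M') $$ (r, c)" using cd r c by (simp add: sum.delta kron_id_def bm_index)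
  finally show "(kron_id n N M * kron_id n N M') $$ (r, c) = kron_id n N (M * M') $$ (r, c)" .
qed (auto simp: kron_id_def)

lemma kron_one: "kron_id n N (1\<^sub>m n) = 1\<^sub>m (n * N)"
proof (rule eq_matI)
  fix r c assume r: "r < dim_row (1\<^sub>m (n * N))" and c: "c < dim_col (1\<^sub>m (n * N))"
  hence r: "r < n * N" and c: "c < n * N" by simp_all
  have n: "0 < n" using r by (cases n) auto
  have rm: "r mod n < n" and cm: "c mod n < n" using n by simp_all
  have "(r div n = c div n \<and> r mod n = c mod n) = (r = c)"
    by (metis div_mult_mod_eq)
  thus "kron_id n N (1\<^sub>m n) $$ (r, c) = 1\<^sub>m (n * N) $$ (r, c)"
    unfolding kron_id_def using r c rm cm by (auto simp: bm_index)
qed (auto simp: kron_id_def)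


lemma mult_neg_entry:
  assumes P: "P \<in> carrier_mat n n" and A: "(A :: real mat) \<in> carrier_mat n n" and a: "a < n" and d: "d < n"
  shows "(P * (- A)) $$ (a, d) = - ((P * A) $$ (a, d))"
proof -
  have nA: "- A \<in> carrier_mat n n" using A by simp
  show ?thesis unfolding mult_entry[OF P nA a d] mult_entry[OF P A a d]
    using A a d by (simp add: sum_negf[symmetric])
qed

lemma Tm_Ti:
  assumes A: "A \<in> carrier_mat n n"
  shows "Tm n N A * Ti n N A = 1\<^sub>m (n * N)"
proof (rule eq_matI)
  fix r c assume r: "r < dim_row (1\<^sub>m (n * N))" and c: "c < dim_col (1\<^sub>m (n * N))"
  hence r: "r < n * N" and c: "c < n * N" by simp_all
  define k where "k = r div n"
  define m where "m = c div n"
  define a where "a = r mod n"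
  define d where "d = c mod n"
  have kN: "k < N" and an: "a < n" using rc_decomp[OF r] unfolding k_def a_def by auto
  have mN: "m < N" and dn: "d < n" using rc_decomp[OF c] unfolding m_def d_def by auto
  define X where "X = (if m \<le> k then (A ^\<^sub>m (k - m) * 1\<^sub>m n) $$ (a, d) else 0)"
  define Y where "Y = (if Suc m \<le> k then (A ^\<^sub>m (k - Suc m) * (- A)) $$ (a, d) else 0)"
  have "(Tm n N A * Ti n N A) $$ (r, c) =
     (\<Sum>l<N. if l \<le> k \<and> (l = m \<or> l = Suc m) then (A ^\<^sub>m (k - l) * (if l = m then 1\<^sub>m n else - A)) $$ (a, d) else 0)"
    unfolding Tm_def Ti_def k_def m_def a_def d_def by (rule bm_mult_index[OF _ _ r c]) (use A in auto)
  also have "\<dots> = (\<Sum>l<N. (if l = m then X else 0) + (if l = Suc m then Y else 0))"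
    by (rule sum.cong[OF refl]) (auto simp: X_def Y_def)
  also have "\<dots> = X + (if Suc m < N then Y else 0)"
    using mN by (simp add: sum.distrib sum.delta)
  also have "\<dots> = X + Y" using kN by (auto simp: Y_def)
  also have "\<dots> = (if k = m \<and> a = d then 1 else 0)"
  proof (cases "Suc m \<le> k")
    case True
    have p: "A ^\<^sub>m (k - m) = A ^\<^sub>m (k - Suc m) * A" using True
      by (metis Suc_diff_Suc Suc_le_lessD pow_mat.simps(2))
    have "Y = - ((A ^\<^sub>m (k - Suc m) * A) $$ (a, d))"
      unfolding Y_def using True mult_neg_entry[OF pow_carrier_mat[OF A] A an dn] by simp
    moreover have "X = (A ^\<^sub>m (k - m)) $$ (a, d)" unfolding X_def using True A by simp
    ultimately show ?thesis using True p by simp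
  next
    case False
    thus ?thesis using A an dn by (cases "m \<le> k") (auto simp: X_def Y_def)
  qed
  also have "\<dots> = 1\<^sub>m (n * N) $$ (r, c)"
  proof -
    have "(k = m \<and> a = d) = (r = c)" unfolding k_def m_def a_def d_def by (metis div_mult_mod_eq)
    thus ?thesis using r c by simp
  qed
  finally show "(Tm n N A * Ti n N A) $$ (r, c) = 1\<^sub>m (n * N) $$ (r, c)" .
qed (auto simp: Tm_def Ti_def)

lemma Ti_Tm:
  assumes A: "A \<in> carrier_mat n n"
  shows "Ti n N A * Tm n N A = 1\<^sub>m (n * N)"
  by (rule mat_mult_left_right_inverse[OF _ _ Tm_Ti[OF A]]) (auto simp: Tm_def Ti_def)


lemma div_le_of_lt: "(r::nat) < c \<Longrightarrow> r div n \<le> c div n"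
  by (simp add: div_le_mono)

lemma Tm_entry_upper:
  assumes A: "A \<in> carrier_mat n n" and rc: "r < c" and c: "c < n * N"
  shows "Tm n N A $$ (r, c) = 0"
proof -
  have r: "r < n * N" using rc c by simp
  have le: "r div n \<le> c div n" using rc by (rule div_le_of_lt)
  have am: "r mod n < n" and dm: "c mod n < n" using rc_decomp[OF r] rc_decomp[OF c] by auto
  show ?thesis
  proof (cases "c div n \<le> r div n")
    case True
    hence eq: "r div n = c div n" using le by simp
    hence "r mod n \<noteq> c mod n" using rc by (metis div_mult_mod_eq less_irrefl)
    thus ?thesis unfolding Tm_def using r c eq A am dm by (simp add: bm_index)
  next
    case False thus ?thesis unfolding Tm_def using r c by (simp add: bm_index)
  qed
qed

lemma Tm_entry_diag:
  assumes A: "A \<in> carrier_mat n n" and r: "r < n * N"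
  shows "Tm n N A $$ (r, r) = 1"
  unfolding Tm_def using r A rc_decomp[OF r] by (simp add: bm_index)

lemma FexT_entry_upper:
  assumes Ae: "Ae \<in> carrier_mat n n" and DA: "DA \<in> carrier_mat n n" and Ax: "Ax \<in> carrier_mat n n"
    and r: "r < n * N" and c: "c < n * N" and le: "r div n \<le> c div n"
  shows "(F_ex n N Ae DA * Tm n N Ax) $$ (r, c) = 0"
proof -
  have "(F_ex n N Ae DA * Tm n N Ax) $$ (r, c) =
     (\<Sum>l<N. if l < r div n \<and> c div n \<le> l then (Ae ^\<^sub>m (r div n - l - 1) * DA * Ax ^\<^sub>m (l - c div n)) $$ (r mod n, c mod n) else 0)"
    unfolding F_ex_def Tm_def by (rule bm_mult_index[OF _ _ r c]) (use Ae DA Ax in auto)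
  also have "\<dots> = 0" using le by (intro sum.neutral) auto
  finally show ?thesis .
qed

lemma det_G:
  assumes Ae: "Ae \<in> carrier_mat n n" and DA: "DA \<in> carrier_mat n n" and Ax: "Ax \<in> carrier_mat n n"
  shows "det (Tm n N Ae + F_ex n N Ae DA * Tm n N Ax) = 1"
proof -
  let ?G = "Tm n N Ae + F_ex n N Ae DA * Tm n N Ax"
  have Gc: "?G \<in> carrier_mat (n * N) (n * N)"
    using add_carrier_mat[OF mult_carrier_mat[OF Fex_c[of n N Ae DA] Tm_c[of n N Ax]]] .
  have up: "?G $$ (i, j) = 0" if "i < j" "j < n * N" for i j
  proof -
    have i: "i < n * N" using that by simp
    have "?G $$ (i, j) = Tm n N Ae $$ (i, j) + (F_ex n N Ae DA * Tm n N Ax) $$ (i, j)"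
      using i that by (simp add: Tm_def F_ex_def)
    also have "\<dots> = 0" using Tm_entry_upper[OF Ae that] FexT_entry_upper[OF Ae DA Ax i that(2) div_le_of_lt[OF that(1)]] by simp
    finally show ?thesis .
  qed
  have dg: "?G $$ (i, i) = 1" if i: "i < n * N" for i
  proof -
    have "?G $$ (i, i) = Tm n N Ae $$ (i, i) + (F_ex n N Ae DA * Tm n N Ax) $$ (i, i)"
      using i by (simp add: Tm_def F_ex_def)
    thus ?thesis using Tm_entry_diag[OF Ae i] FexT_entry_upper[OF Ae DA Ax i i] by simp
  qed
  have "det ?G = prod_list (diag_mat ?G)" by (rule det_lower_triangular[OF up Gc])
  also have "diag_mat ?G = replicate (n * N) 1"
    by (rule nth_equalityI) (use dg Gc in \<open>auto simp: diag_mat_def\<close>)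
  finally show ?thesis by simp
qed

lemma det_Tm:
  assumes A: "A \<in> carrier_mat n n"
  shows "det (Tm n N A) = 1"
proof -
  have Tc: "Tm n N A \<in> carrier_mat (n * N) (n * N)" by (simp add: Tm_def)
  have "det (Tm n N A) = prod_list (diag_mat (Tm n N A))"
    by (rule det_lower_triangular[OF _ Tc]) (rule Tm_entry_upper[OF A])
  also have "diag_mat (Tm n N A) = replicate (n * N) 1"
    by (rule nth_equalityI) (use Tm_entry_diag[OF A, of _ N] in \<open>auto simp: diag_mat_def\<close>)
  finally show ?thesis by simp
qed


lemma mult_carrier_sq[simp]: "A \<in> carrier_mat m m \<Longrightarrow> B \<in> carrier_mat m m \<Longrightarrow> A * B \<in> carrier_mat m m"
  by (rule mult_carrier_mat)

lemma minv_eq: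
  fixes M N' :: "real mat"
  assumes M: "M \<in> carrier_mat m m" and N': "N' \<in> carrier_mat m m" and MN: "M * N' = 1\<^sub>m m"
  shows "minv M = N'"
proof -
  have NM: "N' * M = 1\<^sub>m m" by (rule mat_mult_left_right_inverse[OF M N' MN])
  let ?P = "\<lambda>X. X \<in> carrier_mat (dim_col M) (dim_row M) \<and> M * X = 1\<^sub>m (dim_row M) \<and> X * M = 1\<^sub>m (dim_col M)"
  have "?P N'" using M N' MN NM by simp
  hence P0: "?P (minv M)" unfolding minv_def by (rule someI)
  hence X: "minv M \<in> carrier_mat m m" and XM: "minv M * M = 1\<^sub>m m" using M by auto
  have "minv M = minv M * (M * N')" using MN X by simp
  also have "\<dots> = (minv M * M) * N'" using assoc_mult_mat[OF X M N'] by simp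
  also have "\<dots> = N'" using XM N' by simp
  finally show ?thesis .
qed

lemma det_inv:
  fixes M :: "real mat"
  assumes M: "M \<in> carrier_mat m m" and d: "det M \<noteq> 0"
  shows "\<exists>Mi. Mi \<in> carrier_mat m m \<and> M * Mi = 1\<^sub>m m"
proof -
  have "M \<in> Units (ring_mat TYPE(real) m ())" by (rule det_non_zero_imp_unit[OF M d])
  thus ?thesis unfolding Units_def ring_mat_def by auto
qed

lemma Phi_formula:
  fixes A B C CJ L DA K Bi Ci CJi :: "real mat"
  assumes A: "A \<in> carrier_mat n n" and B: "B \<in> carrier_mat n n" and C: "C \<in> carrier_mat n n"
    and CJ: "CJ \<in> carrier_mat n n" and L: "L \<in> carrier_mat n n" and DA: "DA \<in> carrier_mat n n"
    and K: "K \<in> carrier_mat n n"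
    and Bi: "Bi \<in> carrier_mat n n" "B * Bi = 1\<^sub>m n" "Bi * B = 1\<^sub>m n"
    and Ci: "Ci \<in> carrier_mat n n" "C * Ci = 1\<^sub>m n"
    and CJi: "CJi \<in> carrier_mat n n" "CJ * CJi = 1\<^sub>m n" "CJi * CJ = 1\<^sub>m n"
  shows "minv (F_p n N A B C CJ K * minv (F_r n N A B C L DA K)) =
     kron_id n N C * (Tm n N (A - L * C) * Ti n N (A + B * K * C) + F_ex n N (A - L * C) DA) * kron_id n N CJi"
proof -
  define m where "m = n * N"
  define Ax where "Ax = A + B * K * C"
  define Ae where "Ae = A - L * C"
  have Ax: "Ax \<in> carrier_mat n n" unfolding Ax_def using A B K C by simp
  have Ae: "Ae \<in> carrier_mat n n" unfolding Ae_def using minus_carrier_mat[OF mult_carrier_mat[OF L C]] .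
  define Tx where "Tx = Tm n N Ax"
  define Tix where "Tix = Ti n N Ax"
  define Te where "Te = Tm n N Ae"
  define Fe where "Fe = F_ex n N Ae DA"
  define Dc where "Dc = kron_id n N C"
  define Dci where "Dci = kron_id n N Ci"
  define Dj where "Dj = kron_id n N CJ"
  define Dji where "Dji = kron_id n N CJi"
  define Db where "Db = kron_id n N B"
  define Dbi where "Dbi = kron_id n N Bi"
  have c: "Tx \<in> carrier_mat m m" "Tix \<in> carrier_mat m m" "Te \<in> carrier_mat m m" "Fe \<in> carrier_mat m m"
    "Dc \<in> carrier_mat m m" "Dci \<in> carrier_mat m m" "Dj \<in> carrier_mat m m" "Dji \<in> carrier_mat m m"
    "Db \<in> carrier_mat m m" "Dbi \<in> carrier_mat m m"
    unfolding m_def Tx_def Tix_def Te_def Fe_def Dc_def Dci_def Dj_def Dji_def Db_def Dbi_def by simp_all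
  have Fp: "F_p n N A B C CJ K = Dj * (Tx * Db)"
    unfolding F_p_def Fa_T[OF Ax[unfolded Ax_def] B] Dj_def Tx_def Db_def Ax_def ..
  define G where "G = Te + Fe * Tx"
  have Gc: "G \<in> carrier_mat m m" unfolding G_def using c by simp
  have Fr: "F_r n N A B C L DA K = Dc * (G * Db)"
  proof -
    have "F_r n N A B C L DA K = Dc * (Te * Db + Fe * (Tx * Db))"
      unfolding F_r_def Fa_T[OF Ax[unfolded Ax_def] B] Fa_T[OF Ae[unfolded Ae_def] B]
        Dc_def Te_def Fe_def Tx_def Db_def Ae_def Ax_def ..
    also have "Te * Db + Fe * (Tx * Db) = G * Db"
      unfolding G_def using c by (simp add: add_mult_distrib_mat[of _ m m] assoc_mult_mat[of _ m m _ m _ m])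
    finally show ?thesis .
  qed
  have DcDci: "Dc * Dci = 1\<^sub>m m" unfolding Dc_def Dci_def m_def kron_mult[OF C Ci(1)] Ci(2) kron_one ..
  have DbDbi: "Db * Dbi = 1\<^sub>m m" unfolding Db_def Dbi_def m_def kron_mult[OF B Bi(1)] Bi(2) kron_one ..
  have DjDji: "Dj * Dji = 1\<^sub>m m" unfolding Dj_def Dji_def m_def kron_mult[OF CJ CJi(1)] CJi(2) kron_one ..
  have detDc: "det Dc \<noteq> 0"
    using arg_cong[OF DcDci, of det] det_mult[OF c(5) c(6)] by auto
  have detDb: "det Db \<noteq> 0"
    using arg_cong[OF DbDbi, of det] det_mult[OF c(9) c(10)] by auto
  have detG: "det G = 1" unfolding G_def Te_def Fe_def Tx_def by (rule det_G[OF Ae DA Ax])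
  define Fr' where "Fr' = F_r n N A B C L DA K"
  have Frc: "Fr' \<in> carrier_mat m m" unfolding Fr'_def Fr using c Gc by simp
  have "det Fr' = det Dc * (det G * det Db)" unfolding Fr'_def Fr
    using det_mult[OF c(5) mult_carrier_mat[OF Gc c(9)]] det_mult[OF Gc c(9)] by simp
  hence "det Fr' \<noteq> 0" using detDc detDb detG by simp
  then obtain Fri where Fri: "Fri \<in> carrier_mat m m" and FrFri: "Fr' * Fri = 1\<^sub>m m" using det_inv[OF Frc] by blast
  have FriFr: "Fri * Fr' = 1\<^sub>m m" by (rule mat_mult_left_right_inverse[OF Frc Fri FrFri])
  have minvFr: "minv Fr' = Fri" by (rule minv_eq[OF Frc Fri FrFri])
  have TxTix: "Tx * Tix = 1\<^sub>m m" unfolding Tx_def Tix_def m_def by (rule Tm_Ti[OF Ax])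
  have GT: "G * Tix = Te * Tix + Fe"
  proof -
    have "G * Tix = Te * Tix + Fe * Tx * Tix" unfolding G_def
      using add_mult_distrib_mat[OF c(3) mult_carrier_mat[OF c(4) c(1)] c(2)] by simp
    also have "Fe * Tx * Tix = Fe * (Tx * Tix)" by (rule assoc_mult_mat[OF c(4) c(1) c(2)])
    also have "\<dots> = Fe" unfolding TxTix by (rule right_mult_one_mat[OF c(4)])
    finally show ?thesis .
  qed
  have FriDcG: "Fri * (Dc * (G * X)) = Dbi * X" if X: "X \<in> carrier_mat m m" for X
  proof -
    have FriFr': "Fri * (Dc * (G * Db)) = 1\<^sub>m m" using FriFr unfolding Fr'_def Fr .
    have e1: "(Fri * Dc * G) * Db = 1\<^sub>m m"
    proof -
      have "(Fri * Dc * G) * Db = (Fri * Dc) * (G * Db)" by (rule assoc_mult_mat[OF mult_carrier_mat[OF Fri c(5)] Gc c(9)])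
      also have "\<dots> = Fri * (Dc * (G * Db))" by (rule assoc_mult_mat[OF Fri c(5) mult_carrier_mat[OF Gc c(9)]])
      finally show ?thesis using FriFr' by simp
    qed
    have FDG: "Fri * Dc * G \<in> carrier_mat m m" using Fri c(5) Gc by simp
    have e2: "Fri * Dc * G = Dbi"
    proof -
      have "Fri * Dc * G = (Fri * Dc * G) * (Db * Dbi)" unfolding DbDbi by (rule right_mult_one_mat[OF FDG, symmetric])
      also have "\<dots> = ((Fri * Dc * G) * Db) * Dbi" by (rule assoc_mult_mat[OF FDG c(9) c(10), symmetric])
      also have "\<dots> = Dbi" unfolding e1 by (rule left_mult_one_mat[OF c(10)])
      finally show ?thesis .
    qed
    have "Fri * (Dc * (G * X)) = (Fri * Dc * G) * X"
      using Fri c(5) Gc X by (simp add: assoc_mult_mat[of _ m m _ m _ m])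
    thus ?thesis unfolding e2 .
  qed
  have DbX: "Db * (Dbi * X) = X" if X: "X \<in> carrier_mat m m" for X
    using assoc_mult_mat[OF c(9) c(10) X, symmetric] left_mult_one_mat[OF X] DbDbi by simp
  have TxX: "Tx * (Tix * X) = X" if X: "X \<in> carrier_mat m m" for X
    using assoc_mult_mat[OF c(1) c(2) X, symmetric] left_mult_one_mat[OF X] TxTix by simp
  define Phi where "Phi = Dc * (Te * Tix + Fe) * Dji"
  have Phic: "Phi \<in> carrier_mat m m" unfolding Phi_def
    using mult_carrier_mat[OF mult_carrier_mat[OF c(5) add_carrier_mat[OF c(4)]] c(8)] .
  have kap: "F_p n N A B C CJ K * minv (F_r n N A B C L DA K) = Dj * (Tx * Db) * Fri"
    unfolding Fp minvFr[unfolded Fr'_def] ..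
  have kapc: "Dj * (Tx * Db) * Fri \<in> carrier_mat m m" using c Fri by simp
  have "Dj * (Tx * Db) * Fri * Phi = Dj * (Tx * (Db * (Fri * (Dc * (G * (Tix * Dji))))))"
    unfolding Phi_def GT[symmetric] using c Gc Fri by (simp add: assoc_mult_mat[of _ m m _ m _ m])
  also have "\<dots> = 1\<^sub>m m" using c Gc Fri by (simp add: FriDcG DbX TxX DjDji)
  finally have "Dj * (Tx * Db) * Fri * Phi = 1\<^sub>m m" .
  hence "minv (Dj * (Tx * Db) * Fri) = Phi" by (rule minv_eq[OF kapc Phic])
  thus ?thesis unfolding kap Phi_def Dc_def Te_def Tix_def Fe_def Dji_def Ae_def Ax_def .
qed



lemma ac_mult_left:
  fixes P X Y :: "real mat"
  assumes P: "P \<in> carrier_mat a b" and X: "X \<in> carrier_mat b c" and Y: "Y \<in> carrier_mat b c"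
  shows "P * (t \<cdot>\<^sub>m X + (1 - t) \<cdot>\<^sub>m Y) = t \<cdot>\<^sub>m (P * X) + (1 - t) \<cdot>\<^sub>m (P * Y)"
proof -
  have tX: "t \<cdot>\<^sub>m X \<in> carrier_mat b c" and tY: "(1 - t) \<cdot>\<^sub>m Y \<in> carrier_mat b c" using X Y by auto
  show ?thesis unfolding mult_add_distrib_mat[OF P tX tY] mult_smult_distrib[OF P X] mult_smult_distrib[OF P Y] ..
qed

lemma ac_mult_right:
  fixes Q X Y :: "real mat"
  assumes X: "X \<in> carrier_mat a b" and Y: "Y \<in> carrier_mat a b" and Q: "Q \<in> carrier_mat b c"
  shows "(t \<cdot>\<^sub>m X + (1 - t) \<cdot>\<^sub>m Y) * Q = t \<cdot>\<^sub>m (X * Q) + (1 - t) \<cdot>\<^sub>m (Y * Q)"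
proof -
  have tX: "t \<cdot>\<^sub>m X \<in> carrier_mat a b" and tY: "(1 - t) \<cdot>\<^sub>m Y \<in> carrier_mat a b" using X Y by auto
  show ?thesis unfolding add_mult_distrib_mat[OF tX tY Q] mult_smult_assoc_mat[OF X Q] mult_smult_assoc_mat[OF Y Q] ..
qed

lemma ac_add_left:
  fixes Z X Y :: "real mat"
  assumes Z: "Z \<in> carrier_mat a b" and X: "X \<in> carrier_mat a b" and Y: "Y \<in> carrier_mat a b"
  shows "Z + (t \<cdot>\<^sub>m X + (1 - t) \<cdot>\<^sub>m Y) = t \<cdot>\<^sub>m (Z + X) + (1 - t) \<cdot>\<^sub>m (Z + Y)"
  by (rule eq_matI) (use Z X Y in \<open>auto simp: algebra_simps\<close>)

lemma ac_add_right:
  fixes Z X Y :: "real mat"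
  assumes Z: "Z \<in> carrier_mat a b" and X: "X \<in> carrier_mat a b" and Y: "Y \<in> carrier_mat a b"
  shows "(t \<cdot>\<^sub>m X + (1 - t) \<cdot>\<^sub>m Y) + Z = t \<cdot>\<^sub>m (X + Z) + (1 - t) \<cdot>\<^sub>m (Y + Z)"
  by (rule eq_matI) (use Z X Y in \<open>auto simp: algebra_simps\<close>)

lemma Ti_affine:
  fixes X Y :: "real mat"
  assumes X: "X \<in> carrier_mat n n" and Y: "Y \<in> carrier_mat n n"
  shows "Ti n N (t \<cdot>\<^sub>m X + (1 - t) \<cdot>\<^sub>m Y) = t \<cdot>\<^sub>m Ti n N X + (1 - t) \<cdot>\<^sub>m Ti n N Y"
proof (rule eq_matI)
  fix r c assume r: "r < dim_row (t \<cdot>\<^sub>m Ti n N X + (1 - t) \<cdot>\<^sub>m Ti n N Y)" and c: "c < dim_col (t \<cdot>\<^sub>m Ti n N X + (1 - t) \<cdot>\<^sub>m Ti n N Y)"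
  hence r: "r < n * N" and c: "c < n * N" by simp_all
  have am: "r mod n < n" and dm: "c mod n < n" using rc_decomp[OF r] rc_decomp[OF c] by auto
  show "Ti n N (t \<cdot>\<^sub>m X + (1 - t) \<cdot>\<^sub>m Y) $$ (r, c) = (t \<cdot>\<^sub>m Ti n N X + (1 - t) \<cdot>\<^sub>m Ti n N Y) $$ (r, c)"
    using r c am dm X Y by (auto simp: Ti_def bm_index algebra_simps)
qed simp_all

lemma frob_sq: "(frob_norm M)\<^sup>2 = frob_norm_sq M"
proof -
  have "0 \<le> frob_norm_sq M" unfolding frob_norm_sq_def by (intro sum_nonneg) auto
  thus ?thesis unfolding frob_norm_def by simp
qed

lemma frob_affine:
  fixes X Y :: "real mat"
  assumes X: "X \<in> carrier_mat a b" and Y: "Y \<in> carrier_mat a b"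
  shows "(frob_norm (t \<cdot>\<^sub>m X + (1 - t) \<cdot>\<^sub>m Y))\<^sup>2 =
     t * (frob_norm X)\<^sup>2 + (1 - t) * (frob_norm Y)\<^sup>2 - t * (1 - t) * (frob_norm (X - Y))\<^sup>2"
proof -
  have e: "(t * x + (1 - t) * y)\<^sup>2 = t * x\<^sup>2 + (1 - t) * y\<^sup>2 - t * (1 - t) * (x - y)\<^sup>2" for x y :: real
    by (simp add: power2_eq_square algebra_simps)
  have "frob_norm_sq (t \<cdot>\<^sub>m X + (1 - t) \<cdot>\<^sub>m Y) = (\<Sum>i<a. \<Sum>j<b. (t * X $$ (i, j) + (1 - t) * Y $$ (i, j))\<^sup>2)"
    unfolding frob_norm_sq_def using X Y by (intro sum.cong refl) auto
  also have "\<dots> = (\<Sum>i<a. \<Sum>j<b. t * (X $$ (i, j))\<^sup>2 + (1 - t) * (Y $$ (i, j))\<^sup>2 - t * (1 - t) * (X $$ (i, j) - Y $$ (i, j))\<^sup>2)"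
    unfolding e ..
  also have "\<dots> = t * frob_norm_sq X + (1 - t) * frob_norm_sq Y - t * (1 - t) * frob_norm_sq (X - Y)"
    unfolding frob_norm_sq_def using X Y
    by (simp add: sum.distrib sum_subtractf sum_distrib_left)
  finally show ?thesis unfolding frob_sq .
qed


lemma Phi_affine:
  fixes A B C L DA CJi X Y :: "real mat"
  assumes A: "A \<in> carrier_mat n n" and B: "B \<in> carrier_mat n n" and C: "C \<in> carrier_mat n n"
    and L: "L \<in> carrier_mat n n" and DA: "DA \<in> carrier_mat n n" and CJi: "CJi \<in> carrier_mat n n"
    and X: "X \<in> carrier_mat n n" and Y: "Y \<in> carrier_mat n n"
  shows "kron_id n N C * (Tm n N (A - L * C) * Ti n N (A + B * (t \<cdot>\<^sub>m X + (1 - t) \<cdot>\<^sub>m Y) * C) + F_ex n N (A - L * C) DA) * kron_id n N CJi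
    = t \<cdot>\<^sub>m (kron_id n N C * (Tm n N (A - L * C) * Ti n N (A + B * X * C) + F_ex n N (A - L * C) DA) * kron_id n N CJi)
      + (1 - t) \<cdot>\<^sub>m (kron_id n N C * (Tm n N (A - L * C) * Ti n N (A + B * Y * C) + F_ex n N (A - L * C) DA) * kron_id n N CJi)"
proof -
  have BX: "B * X \<in> carrier_mat n n" and BY: "B * Y \<in> carrier_mat n n" using B X Y by auto
  have BXC: "B * X * C \<in> carrier_mat n n" and BYC: "B * Y * C \<in> carrier_mat n n" using BX BY C by auto
  have e1: "A + B * (t \<cdot>\<^sub>m X + (1 - t) \<cdot>\<^sub>m Y) * C = t \<cdot>\<^sub>m (A + B * X * C) + (1 - t) \<cdot>\<^sub>m (A + B * Y * C)"
    unfolding ac_mult_left[OF B X Y] ac_mult_right[OF BX BY C] ac_add_left[OF A BXC BYC] ..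
  have AX: "A + B * X * C \<in> carrier_mat n n" and AY: "A + B * Y * C \<in> carrier_mat n n" using BXC BYC by auto
  have e2: "Ti n N (A + B * (t \<cdot>\<^sub>m X + (1 - t) \<cdot>\<^sub>m Y) * C) = t \<cdot>\<^sub>m Ti n N (A + B * X * C) + (1 - t) \<cdot>\<^sub>m Ti n N (A + B * Y * C)"
    unfolding e1 by (rule Ti_affine[OF AX AY])
  have T1: "Ti n N (A + B * X * C) \<in> carrier_mat (n * N) (n * N)" and T2: "Ti n N (A + B * Y * C) \<in> carrier_mat (n * N) (n * N)" by simp_all
  have Te: "Tm n N (A - L * C) \<in> carrier_mat (n * N) (n * N)" by simp
  have Fe: "F_ex n N (A - L * C) DA \<in> carrier_mat (n * N) (n * N)" by simp
  have P1: "Tm n N (A - L * C) * Ti n N (A + B * X * C) \<in> carrier_mat (n * N) (n * N)"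
    and P2: "Tm n N (A - L * C) * Ti n N (A + B * Y * C) \<in> carrier_mat (n * N) (n * N)" by simp_all
  have Q1: "Tm n N (A - L * C) * Ti n N (A + B * X * C) + F_ex n N (A - L * C) DA \<in> carrier_mat (n * N) (n * N)"
    and Q2: "Tm n N (A - L * C) * Ti n N (A + B * Y * C) + F_ex n N (A - L * C) DA \<in> carrier_mat (n * N) (n * N)"
    using add_carrier_mat[OF Fe] by blast+
  have Dc: "kron_id n N C \<in> carrier_mat (n * N) (n * N)" and Dj: "kron_id n N CJi \<in> carrier_mat (n * N) (n * N)" by simp_all
  have R1: "kron_id n N C * (Tm n N (A - L * C) * Ti n N (A + B * X * C) + F_ex n N (A - L * C) DA) \<in> carrier_mat (n * N) (n * N)"
    and R2: "kron_id n N C * (Tm n N (A - L * C) * Ti n N (A + B * Y * C) + F_ex n N (A - L * C) DA) \<in> carrier_mat (n * N) (n * N)"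
    using Dc Q1 Q2 by simp_all
  show ?thesis
    unfolding e2 ac_mult_left[OF Te T1 T2] ac_add_right[OF Fe P1 P2] ac_mult_left[OF Dc Q1 Q2] ac_mult_right[OF R1 R2 Dj] ..
qed

lemma inv_of:
  fixes B :: "real mat"
  assumes B: "B \<in> carrier_mat n n" and inv: "invertible_mat B"
  shows "\<exists>Bi. Bi \<in> carrier_mat n n \<and> B * Bi = 1\<^sub>m n \<and> Bi * B = 1\<^sub>m n"
proof -
  obtain Bi where e1: "B * Bi = 1\<^sub>m (dim_row B)" and e2: "Bi * B = 1\<^sub>m (dim_row Bi)"
    using inv unfolding invertible_mat_def inverts_mat_def by blast
  have c1: "dim_col Bi = n" using arg_cong[OF e1, of dim_col] B by simp
  have r1: "dim_row Bi = n" using arg_cong[OF e2, of dim_col] B by simp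
  have "Bi \<in> carrier_mat n n" using c1 r1 by auto
  thus ?thesis using e1 e2 B r1 by auto
qed

theorem theorem2:
  fixes nx Nh :: nat and \<eta> :: real and A B C CJ L DA :: "real mat"
  assumes "0 < nx" and "0 < Nh" and "0 < \<eta>"
    and "A \<in> carrier_mat nx nx" and "B \<in> carrier_mat nx nx" and "C \<in> carrier_mat nx nx"
    and "CJ \<in> carrier_mat nx nx" and "L \<in> carrier_mat nx nx" and "DA \<in> carrier_mat nx nx"
    and "invertible_mat B" and "invertible_mat C" and "invertible_mat CJ"
  shows "strongly_convex_on_mat nx nx (\<lambda>K. q_bar nx Nh \<eta> A B C CJ L DA K)"
proof -
  note as = assms
  have A: "A \<in> carrier_mat nx nx" and B: "B \<in> carrier_mat nx nx" and C: "C \<in> carrier_mat nx nx"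
    and CJ: "CJ \<in> carrier_mat nx nx" and L: "L \<in> carrier_mat nx nx" and DA: "DA \<in> carrier_mat nx nx"
    using as by auto
  obtain Bi where Bi: "Bi \<in> carrier_mat nx nx" "B * Bi = 1\<^sub>m nx" "Bi * B = 1\<^sub>m nx" using inv_of[OF B as(10)] by blast
  obtain Ci where Ci: "Ci \<in> carrier_mat nx nx" "C * Ci = 1\<^sub>m nx" "Ci * C = 1\<^sub>m nx" using inv_of[OF C as(11)] by blast
  obtain CJi where CJi: "CJi \<in> carrier_mat nx nx" "CJ * CJi = 1\<^sub>m nx" "CJi * CJ = 1\<^sub>m nx" using inv_of[OF CJ as(12)] by blast
  define Phi where "Phi K = kron_id nx Nh C * (Tm nx Nh (A - L * C) * Ti nx Nh (A + B * K * C) + F_ex nx Nh (A - L * C) DA) * kron_id nx Nh CJi" for K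
  define g where "g M = (\<Sum>i = 2..nx * Nh. sigma M i)" for M
  have Phic: "Phi K \<in> carrier_mat (nx * Nh) (nx * Nh)" for K
  proof -
    have "Tm nx Nh (A - L * C) * Ti nx Nh (A + B * K * C) + F_ex nx Nh (A - L * C) DA \<in> carrier_mat (nx * Nh) (nx * Nh)"
      using add_carrier_mat[OF Fex_c] by blast
    thus ?thesis unfolding Phi_def by simp
  qed
  have q: "q_bar nx Nh \<eta> A B C CJ L DA K = \<eta> * (frob_norm K)\<^sup>2 + g (Phi K)" if K: "K \<in> carrier_mat nx nx" for K
    unfolding q_bar_def Let_def g_def Phi_def
    using Phi_formula[OF A B C CJ L DA K Bi(1,2,3) Ci(1,2) CJi(1,2,3), of Nh] by simp
  show ?thesis unfolding strongly_convex_on_mat_def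
  proof (intro exI[of _ "2 * \<eta>"] conjI ballI allI impI)
    show "0 < 2 * \<eta>" using as(3) by simp
    fix X Y :: "real mat" and t :: real assume X: "X \<in> carrier_mat nx nx" and Y: "Y \<in> carrier_mat nx nx" and t: "0 \<le> t \<and> t \<le> 1"
    have Kt: "t \<cdot>\<^sub>m X + (1 - t) \<cdot>\<^sub>m Y \<in> carrier_mat nx nx" using X Y by simp
    have PhiKt: "Phi (t \<cdot>\<^sub>m X + (1 - t) \<cdot>\<^sub>m Y) = t \<cdot>\<^sub>m Phi X + (1 - t) \<cdot>\<^sub>m Phi Y"
      unfolding Phi_def by (rule Phi_affine[OF A B C L DA CJi(1) X Y])
    have gle: "g (Phi (t \<cdot>\<^sub>m X + (1 - t) \<cdot>\<^sub>m Y)) \<le> t * g (Phi X) + (1 - t) * g (Phi Y)"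
      unfolding PhiKt g_def using t by (intro g_convex[OF Phic Phic]) auto
    have fr: "(frob_norm (t \<cdot>\<^sub>m X + (1 - t) \<cdot>\<^sub>m Y))\<^sup>2 =
        t * (frob_norm X)\<^sup>2 + (1 - t) * (frob_norm Y)\<^sup>2 - t * (1 - t) * (frob_norm (X - Y))\<^sup>2"
      by (rule frob_affine[OF X Y])
    have "q_bar nx Nh \<eta> A B C CJ L DA (t \<cdot>\<^sub>m X + (1 - t) \<cdot>\<^sub>m Y)
        = \<eta> * (t * (frob_norm X)\<^sup>2 + (1 - t) * (frob_norm Y)\<^sup>2 - t * (1 - t) * (frob_norm (X - Y))\<^sup>2)
          + g (Phi (t \<cdot>\<^sub>m X + (1 - t) \<cdot>\<^sub>m Y))"
      using q[OF Kt] fr by simp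
    also have "\<dots> \<le> \<eta> * (t * (frob_norm X)\<^sup>2 + (1 - t) * (frob_norm Y)\<^sup>2 - t * (1 - t) * (frob_norm (X - Y))\<^sup>2)
          + (t * g (Phi X) + (1 - t) * g (Phi Y))"
      using gle by simp
    also have "\<dots> = t * (\<eta> * (frob_norm X)\<^sup>2 + g (Phi X)) + (1 - t) * (\<eta> * (frob_norm Y)\<^sup>2 + g (Phi Y))
          - (2 * \<eta> / 2) * t * (1 - t) * (frob_norm (X - Y))\<^sup>2"
      by (simp add: algebra_simps)
    also have "\<dots> = t * q_bar nx Nh \<eta> A B C CJ L DA X + (1 - t) * q_bar nx Nh \<eta> A B C CJ L DA Y
          - (2 * \<eta> / 2) * t * (1 - t) * (frob_norm (X - Y))\<^sup>2"
      using q[OF X] q[OF Y] by simp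
    finally show "q_bar nx Nh \<eta> A B C CJ L DA (t \<cdot>\<^sub>m X + (1 - t) \<cdot>\<^sub>m Y)
        \<le> t * q_bar nx Nh \<eta> A B C CJ L DA X + (1 - t) * q_bar nx Nh \<eta> A B C CJ L DA Y
          - (2 * \<eta> / 2) * t * (1 - t) * (frob_norm (X - Y))\<^sup>2" .
  qed
qed

end
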